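(* Let $m\le p<n$. Let $Q$ be an $n\times p$ matrix with $Q^*BQ=I_p$ of the form $$Q=[\,(X_m+X_m'G)L^{-1}\;\;V\,]\,U,$$ where: - $G$ is $(n-m)\times m$ with $\|G\|=\epsilon\le1/2$; - $V$ is $n\times(p-m)$; - $U$ is $p\times p$ unitary; - $L^{-1}=[(X_m+X_m'G)^*B(X_m+X_m'G)]^{-1/2}$. Then: (1) $\|L^{-1}-I_m\|\le\epsilon^2$, and $V=X_mS+X_m'HR$ for some $m\times(p-m)$ matrix $S$ with $\|S\|\le\epsilon$, some $(n-m)\times(p-m)$ matrix $H$ with $H^*H=I_{p-m}$, and some $(p-m)\times(p-m)$ matrix $R$ with $\|R-I_{p-m}\|\le\epsilon^2$. (2) $X^*BQ=\left(\begin{bmatrix}I_m&0\\0&H\end{bmatrix}+\Theta\right)U$, where $\Theta=\begin{bmatrix}\Theta_{11}&\Theta_{12}\\ \Theta_{21}&\Theta_{22}\end{bmatrix}$ with $\Theta_{11}$ of size $m\times m$ satisfies $\|\Theta_{11}\|,\|\Theta_{22}\|\le\epsilon^2$ and $\|\Theta_{12}\|,\|\Theta_{21}\|\le(1+\epsilon^2)\epsilon$. (3) For every real diagonal $n\times n$ matrix $D=\mathrm{diag}(D_m,D_m')$, with $D_m$ of size $m\times m$, $$(Q^*BX)D(X^*BQ)=U^*\left(\begin{bmatrix}D_m&0\\0&H^*D_m'H\end{bmatrix}+\Delta\right)U,\qquad \Delta=\begin{bmatrix}\Delta_{11}&\Delta_{12}\\ \Delta_{12}^*&\Delta_{22}\end{bmatrix},$$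 where $\Delta_{11}$ is $m\times m$, $\|\Delta_{11}\|,\|\Delta_{22}\|\le4\|D\|\epsilon^2$ and $\|\Delta_{12}\|\le4\|D\|\epsilon$.
   Context: Setup: - $A,B$ are Hermitian $n\times n$ matrices, $B$ positive definite, $B=C^*C$ with $C$ invertible. - $X=[x_1,\dots,x_n]$ satisfies $X^*BX=I$ (so $CX$ is unitary) and $AX=BX\Lambda$, with $\Lambda$ real diagonal. - $X_m=[x_1,\dots,x_m]$ and $X_m'=[x_{m+1},\dots,x_n]$. - $\|\cdot\|$ is the spectral norm; $(\cdot)^{-1/2}$ of a Hermitian positive definite matrix is the principal inverse square root. *)

theory Defs
  imports Complex_Main "Jordan_Normal_Form.Schur_Decomposition"
begin

definition hermitian_mat :: "complex mat \<Rightarrow> bool" where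
  "hermitian_mat M \<longleftrightarrow> square_mat M \<and> mat_adjoint M = M"

definition pos_def_mat :: "complex mat \<Rightarrow> bool" where
  "pos_def_mat M \<longleftrightarrow> hermitian_mat M \<and>
     (\<forall>x \<in> carrier_vec (dim_row M). x \<noteq> 0\<^sub>v (dim_row M) \<longrightarrow>
        Im ((M *\<^sub>v x) \<bullet>c x) = 0 \<and> Re ((M *\<^sub>v x) \<bullet>c x) > 0)"

definition unitary_mat :: "complex mat \<Rightarrow> bool" where
  "unitary_mat U \<longleftrightarrow> square_mat U \<and> mat_adjoint U * U = 1\<^sub>m (dim_row U)"

definition vec_norm2 :: "complex vec \<Rightarrow> real" where
  "vec_norm2 v = sqrt (\<Sum>i<dim_vec v. (cmod (v $ i))\<^sup>2)"

definition spec_norm :: "complex mat \<Rightarrow> real" where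
  "spec_norm M = Sup {vec_norm2 (M *\<^sub>v v) | v. v \<in> carrier_vec (dim_col M) \<and> vec_norm2 v \<le> 1}"

text \<open>Principal inverse square root of a Hermitian positive definite matrix W:
  the unique Hermitian positive definite M with M^2 = W^{-1}, i.e. M * M * W = I.\<close>
definition inv_sqrt_mat :: "complex mat \<Rightarrow> complex mat" where
  "inv_sqrt_mat W = (THE M. M \<in> carrier_mat (dim_row W) (dim_row W) \<and> pos_def_mat M \<and>
                           M * M * W = 1\<^sub>m (dim_row W))"

definition hcat :: "complex mat \<Rightarrow> complex mat \<Rightarrow> complex mat" where
  "hcat P V = mat (dim_row P) (dim_col P + dim_col V)
     (\<lambda>(i,j). if j < dim_col P then P $$ (i,j) else V $$ (i, j - dim_col P))"

definition cols_first :: "complex mat \<Rightarrow> nat \<Rightarrow> complex mat" where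
  "cols_first X m = mat (dim_row X) m (\<lambda>(i,j). X $$ (i,j))"

definition cols_rest :: "complex mat \<Rightarrow> nat \<Rightarrow> complex mat" where
  "cols_rest X m = mat (dim_row X) (dim_col X - m) (\<lambda>(i,j). X $$ (i, j + m))"

end

theory Submission
  imports Defs "HOL-Analysis.L2_Norm" "Jordan_Normal_Form.Spectral_Radius"
begin


lemma conj_cnj[simp]: "conjugate (z::complex) = cnj z"
  by (simp add: conjugate_complex_def)

lemma adj_dim[simp]: "dim_row (mat_adjoint A) = dim_col A" "dim_col (mat_adjoint A) = dim_row A"
  by (auto simp: mat_adjoint_def)

lemma adj_carrier[simp,intro]: "A \<in> carrier_mat n m \<Longrightarrow> mat_adjoint A \<in> carrier_mat m n"
  unfolding carrier_mat_def by simp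

lemma adj_index[simp]: "i < dim_col A \<Longrightarrow> j < dim_row A \<Longrightarrow> mat_adjoint A $$ (i,j) = cnj (A $$ (j,i))"
  by (simp add: mat_adjoint_def mat_of_rows_def)

lemma adj_adj[simp]: "mat_adjoint (mat_adjoint A) = (A :: complex mat)"
  by (rule eq_matI, simp_all)

lemma adj_mult: assumes "A \<in> carrier_mat n k" "B \<in> carrier_mat k m"
  shows "mat_adjoint (A * B) = mat_adjoint B * (mat_adjoint A :: complex mat)"
proof (rule eq_matI)
  fix i j assume ij: "i < dim_row (mat_adjoint B * mat_adjoint A)" "j < dim_col (mat_adjoint B * mat_adjoint A)"
  hence i: "i < m" and j: "j < n" using assms by auto
  have "mat_adjoint (A * B) $$ (i,j) = cnj (\<Sum>l<k. A $$ (j,l) * B $$ (l,i))"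
    using assms i j by (simp add: scalar_prod_def atLeast0LessThan)
  also have "\<dots> = (\<Sum>l<k. cnj (B $$ (l,i)) * cnj (A $$ (j,l)))"
    by (simp add: cnj_sum mult.commute)
  also have "\<dots> = (mat_adjoint B * mat_adjoint A) $$ (i,j)"
    using assms i j by (simp add: scalar_prod_def atLeast0LessThan)
  finally show "mat_adjoint (A * B) $$ (i,j) = (mat_adjoint B * mat_adjoint A) $$ (i,j)" .
qed (insert assms, auto)

lemma adj_mult': "dim_col A = dim_row B \<Longrightarrow> mat_adjoint (A * B) = mat_adjoint B * (mat_adjoint A :: complex mat)"
  by (rule adj_mult[of A "dim_row A" "dim_col A" B "dim_col B"]) auto

lemma adj_add: assumes "A \<in> carrier_mat n m" "B \<in> carrier_mat n m"
  shows "mat_adjoint (A + B) = mat_adjoint A + (mat_adjoint B :: complex mat)"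
  using assms by (intro eq_matI) auto

lemma adj_minus: assumes "A \<in> carrier_mat n m" "B \<in> carrier_mat n m"
  shows "mat_adjoint (A - B) = mat_adjoint A - (mat_adjoint B :: complex mat)"
  using assms by (intro eq_matI) auto

lemma adj_uminus: "mat_adjoint (- A) = - (mat_adjoint A :: complex mat)"
  by (intro eq_matI) auto

lemma adj_one[simp]: "mat_adjoint (1\<^sub>m n) = (1\<^sub>m n :: complex mat)"
  by (intro eq_matI) auto

lemma adj_zero[simp]: "mat_adjoint (0\<^sub>m n m) = (0\<^sub>m m n :: complex mat)"
  by (intro eq_matI) auto

lemma adj_mult_vec: assumes "A \<in> carrier_mat n m" "x \<in> carrier_vec m" "y \<in> carrier_vec n"
  shows "(A *\<^sub>v x) \<bullet>c y = x \<bullet>c (mat_adjoint A *\<^sub>v (y :: complex vec))"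
proof -
  have "(A *\<^sub>v x) \<bullet>c y = (\<Sum>i<n. (\<Sum>j<m. A $$ (i,j) * x $ j) * cnj (y $ i))"
    using assms by (simp add: scalar_prod_def atLeast0LessThan)
  also have "\<dots> = (\<Sum>j<m. x $ j * cnj (\<Sum>i<n. cnj (A $$ (i,j)) * y $ i))"
    apply (simp add: sum_distrib_left sum_distrib_right cnj_sum)
    apply (subst sum.swap)
    apply (simp add: mult_ac)
    done
  also have "\<dots> = x \<bullet>c (mat_adjoint A *\<^sub>v y)"
    using assms by (simp add: scalar_prod_def atLeast0LessThan)
  finally show ?thesis .
qed



lemma vn_L2: "vec_norm2 v = L2_set (\<lambda>i. cmod (v $ i)) {..<dim_vec v}"
  by (simp add: vec_norm2_def L2_set_def)

lemma vn_nonneg[simp]: "0 \<le> vec_norm2 v"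
  by (simp add: vn_L2)

lemma cinner_self: "v \<bullet>c v = complex_of_real ((vec_norm2 v)\<^sup>2)"
proof -
  have "v \<bullet>c v = (\<Sum>i<dim_vec v. v $ i * cnj (v $ i))"
    by (simp add: scalar_prod_def atLeast0LessThan)
  also have "\<dots> = (\<Sum>i<dim_vec v. complex_of_real ((cmod (v $ i))\<^sup>2))"
    by (rule sum.cong[OF refl], rule complex_norm_square[symmetric])
  also have "\<dots> = complex_of_real ((vec_norm2 v)\<^sup>2)"
    by (simp add: vec_norm2_def sum_nonneg)
  finally show ?thesis .
qed

lemma vn_sq: "(vec_norm2 v)\<^sup>2 = Re (v \<bullet>c v)"
  by (simp add: cinner_self)

lemma vn_zero_iff: assumes "v \<in> carrier_vec n" shows "vec_norm2 v = 0 \<longleftrightarrow> v = 0\<^sub>v n"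
proof
  assume "vec_norm2 v = 0"
  hence "\<forall>i\<in>{..<dim_vec v}. cmod (v $ i) = 0" by (simp add: vn_L2 L2_set_eq_0_iff)
  thus "v = 0\<^sub>v n" using assms by (intro eq_vecI) auto
next
  assume "v = 0\<^sub>v n" thus "vec_norm2 v = 0" by (simp add: vec_norm2_def)
qed

lemma vn_zero[simp]: "vec_norm2 (0\<^sub>v n) = 0"
  by (simp add: vec_norm2_def)

lemma vn_triangle: assumes "v \<in> carrier_vec n" "w \<in> carrier_vec n"
  shows "vec_norm2 (v + w) \<le> vec_norm2 v + vec_norm2 w"
proof -
  have "vec_norm2 (v + w) = L2_set (\<lambda>i. cmod (v $ i + w $ i)) {..<n}"
    using assms by (auto simp: vn_L2 intro!: L2_set_cong)
  also have "\<dots> \<le> L2_set (\<lambda>i. cmod (v $ i) + cmod (w $ i)) {..<n}"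
    by (rule L2_set_mono) (auto simp: norm_triangle_ineq)
  also have "\<dots> \<le> L2_set (\<lambda>i. cmod (v $ i)) {..<n} + L2_set (\<lambda>i. cmod (w $ i)) {..<n}"
    by (rule L2_set_triangle_ineq)
  also have "\<dots> = vec_norm2 v + vec_norm2 w" using assms by (simp add: vn_L2 carrier_vecD)
  finally show ?thesis .
qed

lemma vn_smult: "vec_norm2 (c \<cdot>\<^sub>v v) = cmod c * vec_norm2 v"
proof -
  have "vec_norm2 (c \<cdot>\<^sub>v v) = L2_set (\<lambda>i. cmod c * cmod (v $ i)) {..<dim_vec v}"
    by (auto simp: vn_L2 norm_mult intro!: L2_set_cong)
  also have "\<dots> = cmod c * vec_norm2 v"
    by (simp add: vn_L2 L2_set_right_distrib)
  finally show ?thesis .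
qed

lemma vn_uminus: "vec_norm2 (- v) = vec_norm2 v"
  by (simp add: vec_norm2_def)

lemma vn_minus_le: assumes "v \<in> carrier_vec n" "w \<in> carrier_vec n"
  shows "vec_norm2 (v - w) \<le> vec_norm2 v + vec_norm2 w"
proof -
  have "v - w = v + (- w)" using assms by auto
  thus ?thesis using vn_triangle[of v n "- w"] assms by (simp add: vn_uminus)
qed

lemma cauchy_schwarz: assumes "v \<in> carrier_vec n" "w \<in> carrier_vec n"
  shows "cmod (v \<bullet>c w) \<le> vec_norm2 v * vec_norm2 w"
proof -
  have "cmod (v \<bullet>c w) = cmod (\<Sum>i<n. v $ i * cnj (w $ i))"
    using assms by (simp add: scalar_prod_def atLeast0LessThan)
  also have "\<dots> \<le> (\<Sum>i<n. cmod (v $ i * cnj (w $ i)))" by (rule norm_sum)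
  also have "\<dots> = (\<Sum>i<n. \<bar>cmod (v $ i)\<bar> * \<bar>cmod (w $ i)\<bar>)" by (simp add: norm_mult)
  also have "\<dots> \<le> L2_set (\<lambda>i. cmod (v $ i)) {..<n} * L2_set (\<lambda>i. cmod (w $ i)) {..<n}"
    by (rule L2_set_mult_ineq)
  also have "\<dots> = vec_norm2 v * vec_norm2 w" using assms by (simp add: vn_L2 carrier_vecD)
  finally show ?thesis .
qed

lemma vn_entry_le: assumes "j < dim_vec v" shows "cmod (v $ j) \<le> vec_norm2 v"
  unfolding vn_L2 by (rule member_le_L2_set) (use assms in auto)

lemma mat_vec_bound: assumes M: "M \<in> carrier_mat r c"
  shows "\<exists>K\<ge>0. \<forall>v \<in> carrier_vec c. vec_norm2 (M *\<^sub>v v) \<le> K * vec_norm2 v"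
proof (intro exI[of _ "\<Sum>i<r. \<Sum>j<c. cmod (M $$ (i,j))"] conjI ballI)
  show "0 \<le> (\<Sum>i<r. \<Sum>j<c. cmod (M $$ (i,j)))" by (simp add: sum_nonneg)
  fix v :: "complex vec" assume v: "v \<in> carrier_vec c"
  have ent: "cmod ((M *\<^sub>v v) $ i) \<le> (\<Sum>j<c. cmod (M $$ (i,j))) * vec_norm2 v" if i: "i < r" for i
  proof -
    have "cmod ((M *\<^sub>v v) $ i) = cmod (\<Sum>j<c. M $$ (i,j) * v $ j)"
      using M v i by (simp add: scalar_prod_def atLeast0LessThan)
    also have "\<dots> \<le> (\<Sum>j<c. cmod (M $$ (i,j)) * cmod (v $ j))"
      by (rule order_trans[OF norm_sum]) (simp add: norm_mult)
    also have "\<dots> \<le> (\<Sum>j<c. cmod (M $$ (i,j)) * vec_norm2 v)"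
      using v by (intro sum_mono mult_left_mono vn_entry_le) auto
    finally show ?thesis by (simp add: sum_distrib_right)
  qed
  have "vec_norm2 (M *\<^sub>v v) = L2_set (\<lambda>i. cmod ((M *\<^sub>v v) $ i)) {..<r}"
    using M by (simp add: vn_L2)
  also have "\<dots> \<le> (\<Sum>i<r. \<bar>cmod ((M *\<^sub>v v) $ i)\<bar>)"
    by (rule L2_set_le_sum_abs)
  also have "\<dots> \<le> (\<Sum>i<r. (\<Sum>j<c. cmod (M $$ (i,j))) * vec_norm2 v)"
    using ent by (intro sum_mono) auto
  finally show "vec_norm2 (M *\<^sub>v v) \<le> (\<Sum>i<r. \<Sum>j<c. cmod (M $$ (i,j))) * vec_norm2 v"
    by (simp add: sum_distrib_right)
qed

lemma sn_set_bdd: assumes M: "M \<in> carrier_mat r c"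
  shows "bdd_above {vec_norm2 (M *\<^sub>v v) | v. v \<in> carrier_vec (dim_col M) \<and> vec_norm2 v \<le> 1}"
proof -
  obtain K where K: "K \<ge> 0" "\<forall>v \<in> carrier_vec c. vec_norm2 (M *\<^sub>v v) \<le> K * vec_norm2 v"
    using mat_vec_bound[OF M] by blast
  show ?thesis
  proof (rule bdd_aboveI[of _ K], clarify)
    fix v :: "complex vec" assume v: "v \<in> carrier_vec (dim_col M)" "vec_norm2 v \<le> 1"
    hence "vec_norm2 (M *\<^sub>v v) \<le> K * vec_norm2 v" using K M by auto
    also have "\<dots> \<le> K" using K v mult_left_mono[of "vec_norm2 v" 1 K] by auto
    finally show "vec_norm2 (M *\<^sub>v v) \<le> K" .
  qed
qed

lemma sn_nonneg: assumes M: "M \<in> carrier_mat r c" shows "0 \<le> spec_norm M"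
proof -
  have "vec_norm2 (M *\<^sub>v 0\<^sub>v c) \<le> spec_norm M"
    unfolding spec_norm_def
    by (rule cSup_upper[OF _ sn_set_bdd[OF M]]) (use M in auto)
  moreover have "M *\<^sub>v 0\<^sub>v c = 0\<^sub>v r" using M by auto
  ultimately show ?thesis by simp
qed

lemma sn_bound: assumes M: "M \<in> carrier_mat r c" and v: "v \<in> carrier_vec c"
  shows "vec_norm2 (M *\<^sub>v v) \<le> spec_norm M * vec_norm2 v"
proof (cases "vec_norm2 v = 0")
  case True
  hence "v = 0\<^sub>v c" using vn_zero_iff v by auto
  moreover have "M *\<^sub>v 0\<^sub>v c = 0\<^sub>v r" using M by auto
  ultimately show ?thesis using True by simp
next
  case False
  hence pos: "vec_norm2 v > 0" using vn_nonneg[of v] by linarith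
  define w where "w = complex_of_real (1 / vec_norm2 v) \<cdot>\<^sub>v v"
  have w: "w \<in> carrier_vec c" "vec_norm2 w \<le> 1" using v pos by (auto simp: w_def vn_smult norm_divide)
  have "vec_norm2 (M *\<^sub>v w) \<le> spec_norm M"
    unfolding spec_norm_def
    by (rule cSup_upper[OF _ sn_set_bdd[OF M]]) (use M w in auto)
  moreover have "M *\<^sub>v w = complex_of_real (1 / vec_norm2 v) \<cdot>\<^sub>v (M *\<^sub>v v)"
    unfolding w_def using M v by (simp add: mult_mat_vec)
  ultimately have "vec_norm2 (M *\<^sub>v v) / vec_norm2 v \<le> spec_norm M"
    using pos by (simp add: vn_smult norm_divide)
  thus ?thesis using pos by (simp add: divide_le_eq mult.commute)
qed

lemma sn_le: assumes M: "M \<in> carrier_mat r c" and K: "K \<ge> 0"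
  and b: "\<And>v. v \<in> carrier_vec c \<Longrightarrow> vec_norm2 (M *\<^sub>v v) \<le> K * vec_norm2 v"
  shows "spec_norm M \<le> K"
  unfolding spec_norm_def
proof (rule cSup_least)
  show "{vec_norm2 (M *\<^sub>v v) | v. v \<in> carrier_vec (dim_col M) \<and> vec_norm2 v \<le> 1} \<noteq> {}"
    using M by (auto intro!: exI[of _ "0\<^sub>v c"])
next
  fix x assume "x \<in> {vec_norm2 (M *\<^sub>v v) | v. v \<in> carrier_vec (dim_col M) \<and> vec_norm2 v \<le> 1}"
  then obtain v where v: "v \<in> carrier_vec c" "vec_norm2 v \<le> 1" and x: "x = vec_norm2 (M *\<^sub>v v)"
    using M by auto
  have "x \<le> K * vec_norm2 v" using b[OF v(1)] x by simp
  also have "\<dots> \<le> K" using K v mult_left_mono[of "vec_norm2 v" 1 K] by auto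
  finally show "x \<le> K" .
qed



definition dmat :: "nat \<Rightarrow> (nat \<Rightarrow> real) \<Rightarrow> complex mat" where
  "dmat n d = mat n n (\<lambda>(i,j). if i = j then complex_of_real (d i) else 0)"

lemma dmat_carrier[simp]: "dmat n d \<in> carrier_mat n n"
  by (simp add: dmat_def)

lemma dmat_dim[simp]: "dim_row (dmat n d) = n" "dim_col (dmat n d) = n"
  by (simp_all add: dmat_def)

lemma dmat_index[simp]: "i < n \<Longrightarrow> j < n \<Longrightarrow> dmat n d $$ (i,j) = (if i = j then complex_of_real (d i) else 0)"
  by (simp add: dmat_def)

lemma massoc: "dim_col A = dim_row B \<Longrightarrow> dim_col B = dim_row C \<Longrightarrow> A * B * C = A * (B * (C :: 'a :: semiring_0 mat))"
  by (rule assoc_mult_mat[of A "dim_row A" "dim_col A" B "dim_col B" C "dim_col C"]) auto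

lemma massocv: "dim_col A = dim_row B \<Longrightarrow> dim_col B = dim_vec v \<Longrightarrow> (A * B) *\<^sub>v v = A *\<^sub>v (B *\<^sub>v (v :: 'a :: semiring_0 vec))"
  by (rule assoc_mult_mat_vec[of A "dim_row A" "dim_col A" B "dim_col B"]) auto

lemma mvc[simp]: "dim_row A = n \<Longrightarrow> A *\<^sub>v v \<in> carrier_vec n"
  by (rule carrier_vecI) simp

lemma mdistl: "dim_col A = dim_row B \<Longrightarrow> dim_row B = dim_row C \<Longrightarrow> dim_col B = dim_col C \<Longrightarrow>
  A * (B + C) = A * B + A * (C :: 'a :: semiring_0 mat)"
  by (rule mult_add_distrib_mat[of A "dim_row A" "dim_col A" B "dim_col B"]) auto

lemma mdistr: "dim_row A = dim_row B \<Longrightarrow> dim_col A = dim_col B \<Longrightarrow> dim_col A = dim_row C \<Longrightarrow>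
  (A + B) * C = A * C + B * (C :: 'a :: semiring_0 mat)"
  by (rule add_mult_distrib_mat[of A "dim_row A" "dim_col A" B C "dim_col C"]) auto

lemma mdistl_minus: "dim_col A = dim_row B \<Longrightarrow> dim_row B = dim_row C \<Longrightarrow> dim_col B = dim_col C \<Longrightarrow>
  A * (B - C) = A * B - A * (C :: 'a :: ring mat)"
  by (rule mult_minus_distrib_mat[of A "dim_row A" "dim_col A" B "dim_col B"]) auto

lemma mdistr_minus: "dim_row A = dim_row B \<Longrightarrow> dim_col A = dim_col B \<Longrightarrow> dim_col A = dim_row C \<Longrightarrow>
  (A - B) * C = A * C - B * (C :: 'a :: ring mat)"
  by (rule minus_mult_distrib_mat[of A "dim_row A" "dim_col A" B C "dim_col C"]) auto

lemma adj_four_block: fixes A B C D :: "complex mat" assumes "A \<in> carrier_mat r1 c1" "B \<in> carrier_mat r1 c2"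
  "C \<in> carrier_mat r2 c1" "D \<in> carrier_mat r2 c2"
  shows "mat_adjoint (four_block_mat A B C D) =
    four_block_mat (mat_adjoint A) (mat_adjoint C) (mat_adjoint B) (mat_adjoint D)"
proof (rule eq_matI)
  fix i j assume "i < dim_row (four_block_mat (mat_adjoint A) (mat_adjoint C) (mat_adjoint B) (mat_adjoint D))"
    "j < dim_col (four_block_mat (mat_adjoint A) (mat_adjoint C) (mat_adjoint B) (mat_adjoint D))"
  hence i: "i < c1 + c2" and j: "j < r1 + r2" using assms by auto
  have "mat_adjoint (four_block_mat A B C D) $$ (i,j) = cnj (four_block_mat A B C D $$ (j,i))"
    by (rule adj_index) (use assms i j in auto)
  thus "mat_adjoint (four_block_mat A B C D) $$ (i,j) =
    four_block_mat (mat_adjoint A) (mat_adjoint C) (mat_adjoint B) (mat_adjoint D) $$ (i,j)"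
    using assms i j by auto
qed (use assms in auto)

lemma orthonormal_completion: fixes v :: "complex vec"
  assumes v: "v \<in> carrier_vec n" and v1: "v \<bullet>c v = 1" and n: "n > 0"
  shows "\<exists>W \<in> carrier_mat n n. mat_adjoint W * W = 1\<^sub>m n \<and> col W 0 = v"
proof -
  interpret cof_vec_space n "TYPE(complex)" .
  have v0: "v \<noteq> 0\<^sub>v n" using v1 v by auto
  define b where "b = basis_completion v"
  from basis_completion[OF v v0, folded b_def]
  have dist_b: "distinct b" and indep: "\<not> lin_dep (set b)" and bc: "set b \<subseteq> carrier_vec n"
    and hdb: "hd b = v" and len_b: "length b = n" by auto
  from hdb len_b n obtain vs where bv: "b = v # vs" by (cases b, auto)
  define ws where "ws = gram_schmidt n b"
  from gram_schmidt_result[OF bc dist_b indep ws_def]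
  have orth: "corthogonal ws" and wsc: "set ws \<subseteq> carrier_vec n" and lenw: "length ws = n" by (auto simp: len_b)
  have hdws: "hd ws = v" using gram_schmidt_hd[OF v, of vs] unfolding ws_def bv .
  have nz: "vec_norm2 (ws ! i) > 0" if "i < n" for i
  proof -
    have "ws ! i \<bullet>c ws ! i \<noteq> 0" using corthogonalD[OF orth, of i i] that lenw by auto
    hence "vec_norm2 (ws ! i) \<noteq> 0" by (auto simp: cinner_self)
    thus ?thesis using vn_nonneg[of "ws ! i"] by linarith
  qed
  define ws' where "ws' = map (\<lambda>w. complex_of_real (1 / vec_norm2 w) \<cdot>\<^sub>v w) ws"
  define W where "W = mat_of_cols n ws'"
  have lenw': "length ws' = n" by (simp add: ws'_def lenw)
  have W: "W \<in> carrier_mat n n" unfolding W_def using lenw' by auto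
  have wsi: "ws ! i \<in> carrier_vec n" if "i < n" for i using wsc that lenw by auto
  have Wij: "W $$ (l, i) = complex_of_real (1 / vec_norm2 (ws ! i)) * (ws ! i $ l)" if "l < n" "i < n" for l i
    using that wsi[of i] unfolding W_def ws'_def by (simp add: mat_of_cols_index lenw)
  have "mat_adjoint W * W = 1\<^sub>m n"
  proof (rule eq_matI)
    fix i j assume "i < dim_row (1\<^sub>m n :: complex mat)" "j < dim_col (1\<^sub>m n :: complex mat)"
    hence i: "i < n" and j: "j < n" by auto
    have "(mat_adjoint W * W) $$ (i,j) = (\<Sum>l<n. cnj (W $$ (l,i)) * W $$ (l,j))"
      using W i j by (simp add: scalar_prod_def atLeast0LessThan)
    also have "\<dots> = complex_of_real (1 / vec_norm2 (ws ! i)) * complex_of_real (1 / vec_norm2 (ws ! j))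
         * (ws ! j \<bullet>c ws ! i)"
      using i j wsi[of i] wsi[of j]
      by (simp add: Wij scalar_prod_def atLeast0LessThan sum_distrib_left mult_ac)
    also have "\<dots> = 1\<^sub>m n $$ (i,j)"
    proof (cases "i = j")
      case True
      have "ws ! i \<bullet>c ws ! i = complex_of_real ((vec_norm2 (ws ! i))\<^sup>2)" by (rule cinner_self)
      thus ?thesis using True nz[OF i] i by (simp add: power2_eq_square)
    next
      case False
      hence "ws ! j \<bullet>c ws ! i = 0" using corthogonalD[OF orth, of j i] i j lenw by auto
      thus ?thesis using False i j by simp
    qed
    finally show "(mat_adjoint W * W) $$ (i,j) = 1\<^sub>m n $$ (i,j)" .
  qed (use W in auto)
  moreover have "col W 0 = v"
  proof -
    have "ws ! 0 = v" using hdws lenw n by (cases ws) auto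
    moreover have "vec_norm2 v = 1"
    proof -
      have "(vec_norm2 v)\<^sup>2 = 1" using v1 by (simp add: vn_sq)
      thus ?thesis using vn_nonneg[of v] by (simp add: power2_eq_1_iff)
    qed
    moreover have "ws' ! 0 = complex_of_real (1 / vec_norm2 (ws ! 0)) \<cdot>\<^sub>v ws ! 0"
      unfolding ws'_def using n lenw by simp
    ultimately have "ws' ! 0 = v" by simp
    moreover have "col W 0 = ws' ! 0" unfolding W_def
      by (rule col_mat_of_cols) (use n lenw' \<open>ws' ! 0 = v\<close> v in auto)
    ultimately show ?thesis by simp
  qed
  ultimately show ?thesis using W by blast
qed



lemma spectral:
  fixes A :: "complex mat"
  assumes "A \<in> carrier_mat n n" "mat_adjoint A = A"
  shows "\<exists>U d. U \<in> carrier_mat n n \<and> mat_adjoint U * U = 1\<^sub>m n \<and> U * mat_adjoint U = 1\<^sub>m n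
     \<and> A = U * dmat n d * mat_adjoint U"
  using assms
proof (induction n arbitrary: A)
  case 0
  show ?case
    by (intro exI[of _ "1\<^sub>m 0"] exI[of _ "\<lambda>_. 0"]) (use 0 in \<open>auto intro!: eq_matI\<close>)
next
  case (Suc k)
  let ?n = "Suc k"
  have A: "A \<in> carrier_mat ?n ?n" and herm: "mat_adjoint A = A" by fact+
  have "spectrum A \<noteq> {}" by (rule spectrum_non_empty[OF A]) simp
  then obtain e where "eigenvalue A e" unfolding spectrum_def by auto
  then obtain v0 where ev: "eigenvector A v0 e" unfolding eigenvalue_def by auto
  hence v0: "v0 \<in> carrier_vec ?n" "v0 \<noteq> 0\<^sub>v ?n" "A *\<^sub>v v0 = e \<cdot>\<^sub>v v0"
    using A unfolding eigenvector_def by auto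
  have npos: "vec_norm2 v0 > 0" using v0 vn_zero_iff[of v0 ?n] vn_nonneg[of v0] by linarith
  define v where "v = complex_of_real (1 / vec_norm2 v0) \<cdot>\<^sub>v v0"
  have v: "v \<in> carrier_vec ?n" using v0 by (simp add: v_def)
  have vn: "vec_norm2 v = 1" using npos by (simp add: v_def vn_smult norm_divide)
  have vv: "v \<bullet>c v = 1" using vn by (simp add: cinner_self)
  have Av: "A *\<^sub>v v = e \<cdot>\<^sub>v v"
    unfolding v_def using A v0 by (simp add: mult_mat_vec smult_smult_assoc mult.commute)
  obtain W where W: "W \<in> carrier_mat ?n ?n" and WW: "mat_adjoint W * W = 1\<^sub>m ?n" and Wc: "col W 0 = v"
    using orthonormal_completion[OF v vv] by auto
  have Ws: "mat_adjoint W \<in> carrier_mat ?n ?n" using W by auto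
  have WW': "W * mat_adjoint W = 1\<^sub>m ?n" by (rule mat_mult_left_right_inverse[OF Ws W WW])
  define A' where "A' = mat_adjoint W * A * W"
  have A': "A' \<in> carrier_mat ?n ?n" unfolding A'_def using W A by auto
  have hA': "mat_adjoint A' = A'"
  proof -
    have "mat_adjoint A' = mat_adjoint W * mat_adjoint (mat_adjoint W * A)"
      unfolding A'_def by (rule adj_mult[OF _ W]) (use W A in auto)
    also have "\<dots> = mat_adjoint W * (mat_adjoint A * W)"
      by (subst adj_mult[OF Ws A]) simp
    also have "\<dots> = A'" unfolding A'_def herm using carrier_matD[OF W] carrier_matD[OF A] by (simp add: massoc)
    finally show ?thesis .
  qed
  have col0: "col A' 0 = e \<cdot>\<^sub>v unit_vec ?n 0"
  proof -
    have "col A' 0 = (mat_adjoint W * A) *\<^sub>v col W 0"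
      unfolding A'_def by (rule col_mult2) (use W A in auto)
    also have "\<dots> = mat_adjoint W *\<^sub>v (A *\<^sub>v v)" using Wc by (simp add: assoc_mult_mat_vec[OF Ws A v])
    also have "\<dots> = e \<cdot>\<^sub>v (mat_adjoint W *\<^sub>v col W 0)" using Av Ws v Wc by (simp add: mult_mat_vec)
    also have "mat_adjoint W *\<^sub>v col W 0 = col (mat_adjoint W * W) 0"
      by (rule col_mult2[symmetric]) (use W in auto)
    also have "\<dots> = unit_vec ?n 0" using WW by simp
    finally show ?thesis .
  qed
  have Ai0: "A' $$ (i,0) = (if i = 0 then e else 0)" if "i < ?n" for i
  proof -
    have "A' $$ (i,0) = col A' 0 $ i" using that A' by simp
    thus ?thesis using col0 that by simp
  qed
  have A0j: "A' $$ (0,j) = (if j = 0 then cnj e else 0)" if "j < ?n" for j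
  proof -
    have "A' $$ (0,j) = mat_adjoint A' $$ (0,j)" using hA' by simp
    also have "\<dots> = cnj (A' $$ (j,0))" using that A' by simp
    finally show ?thesis using Ai0[OF that] by simp
  qed
  have ereal: "e = complex_of_real (Re e)"
  proof -
    have "e = cnj e" using Ai0[of 0] A0j[of 0] by simp
    thus ?thesis using Reals_cnj_iff complex_is_Real_iff by (metis Reals_cases of_real_Re)
  qed
  define A3 where "A3 = mat k k (\<lambda>(i,j). A' $$ (Suc i, Suc j))"
  have A3: "A3 \<in> carrier_mat k k" unfolding A3_def by simp
  have hA3: "mat_adjoint A3 = A3"
  proof (rule eq_matI)
    fix i j assume "i < dim_row A3" "j < dim_col A3"
    hence i: "i < k" and j: "j < k" using A3 by auto
    have "mat_adjoint A3 $$ (i,j) = cnj (A' $$ (Suc j, Suc i))" using i j by (simp add: A3_def)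
    also have "\<dots> = mat_adjoint A' $$ (Suc i, Suc j)" using i j A' by simp
    also have "\<dots> = A3 $$ (i,j)" using hA' i j by (simp add: A3_def)
    finally show "mat_adjoint A3 $$ (i,j) = A3 $$ (i,j)" .
  qed (use A3 in auto)
  obtain U3 d3 where U3: "U3 \<in> carrier_mat k k" "mat_adjoint U3 * U3 = 1\<^sub>m k"
    "U3 * mat_adjoint U3 = 1\<^sub>m k" and A3eq: "A3 = U3 * dmat k d3 * mat_adjoint U3"
    using Suc.IH[OF A3 hA3] by blast
  define Bk where "Bk = four_block_mat (1\<^sub>m 1) (0\<^sub>m 1 k) (0\<^sub>m k 1) U3"
  define d where "d = (\<lambda>i. if i = 0 then Re e else d3 (i - 1))"
  have Bk: "Bk \<in> carrier_mat ?n ?n" unfolding Bk_def using U3 by auto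
  have Bks: "mat_adjoint Bk = four_block_mat (1\<^sub>m 1) (0\<^sub>m 1 k) (0\<^sub>m k 1) (mat_adjoint U3)"
    unfolding Bk_def by (subst adj_four_block[of _ 1 1 _ k _ k]) (use U3 in auto)
  have BkBk: "mat_adjoint Bk * Bk = 1\<^sub>m ?n"
  proof -
    have "mat_adjoint Bk * Bk = four_block_mat (1\<^sub>m 1 * 1\<^sub>m 1 + 0\<^sub>m 1 k * 0\<^sub>m k 1) (1\<^sub>m 1 * 0\<^sub>m 1 k + 0\<^sub>m 1 k * U3)
      (0\<^sub>m k 1 * 1\<^sub>m 1 + mat_adjoint U3 * 0\<^sub>m k 1) (0\<^sub>m k 1 * 0\<^sub>m 1 k + mat_adjoint U3 * U3)"
      unfolding Bks unfolding Bk_def by (rule mult_four_block_mat) (use U3 in auto)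
    also have "\<dots> = four_block_mat (1\<^sub>m 1) (0\<^sub>m 1 k) (0\<^sub>m k 1) (1\<^sub>m k)"
      using U3 by simp
    finally show ?thesis by simp
  qed
  have Dblk: "dmat ?n d = four_block_mat (dmat 1 (\<lambda>_. Re e)) (0\<^sub>m 1 k) (0\<^sub>m k 1) (dmat k d3)"
    by (rule eq_matI) (auto simp: d_def)
  have A'blk: "A' = four_block_mat (dmat 1 (\<lambda>_. Re e)) (0\<^sub>m 1 k) (0\<^sub>m k 1) A3"
  proof (rule eq_matI)
    fix i j assume "i < dim_row (four_block_mat (dmat 1 (\<lambda>_. Re e)) (0\<^sub>m 1 k) (0\<^sub>m k 1) A3)"
      "j < dim_col (four_block_mat (dmat 1 (\<lambda>_. Re e)) (0\<^sub>m 1 k) (0\<^sub>m k 1) A3)"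
    hence i: "i < ?n" and j: "j < ?n" using A3 by auto
    show "A' $$ (i,j) = four_block_mat (dmat 1 (\<lambda>_. Re e)) (0\<^sub>m 1 k) (0\<^sub>m k 1) A3 $$ (i,j)"
    proof (cases "i = 0")
      case True
      thus ?thesis using A0j[OF j] j A3 ereal by (cases "j = 0") (auto, metis complex_cnj_complex_of_real)
    next
      case False
      then obtain i' where i': "i = Suc i'" by (cases i) auto
      show ?thesis
      proof (cases "j = 0")
        case True thus ?thesis using Ai0[OF i] i' i A3 by simp
      next
        case False
        then obtain j' where j': "j = Suc j'" by (cases j) auto
        thus ?thesis using i' i j A3 by (simp add: A3_def)
      qed
    qed
  qed (use A' A3 in auto)
  have BDB: "Bk * dmat ?n d * mat_adjoint Bk = A'"
  proof -
    have "Bk * dmat ?n d = four_block_mat (1\<^sub>m 1 * dmat 1 (\<lambda>_. Re e) + 0\<^sub>m 1 k * 0\<^sub>m k 1) (1\<^sub>m 1 * 0\<^sub>m 1 k + 0\<^sub>m 1 k * dmat k d3)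
      (0\<^sub>m k 1 * dmat 1 (\<lambda>_. Re e) + U3 * 0\<^sub>m k 1) (0\<^sub>m k 1 * 0\<^sub>m 1 k + U3 * dmat k d3)"
      unfolding Dblk Bk_def by (rule mult_four_block_mat) (use U3 in auto)
    also have "\<dots> = four_block_mat (dmat 1 (\<lambda>_. Re e)) (0\<^sub>m 1 k) (0\<^sub>m k 1) (U3 * dmat k d3)"
      using U3 by simp
    finally have 1: "Bk * dmat ?n d = four_block_mat (dmat 1 (\<lambda>_. Re e)) (0\<^sub>m 1 k) (0\<^sub>m k 1) (U3 * dmat k d3)" .
    have "Bk * dmat ?n d * mat_adjoint Bk = four_block_mat (dmat 1 (\<lambda>_. Re e) * 1\<^sub>m 1 + 0\<^sub>m 1 k * 0\<^sub>m k 1)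
       (dmat 1 (\<lambda>_. Re e) * 0\<^sub>m 1 k + 0\<^sub>m 1 k * mat_adjoint U3)
       (0\<^sub>m k 1 * 1\<^sub>m 1 + (U3 * dmat k d3) * 0\<^sub>m k 1) (0\<^sub>m k 1 * 0\<^sub>m 1 k + (U3 * dmat k d3) * mat_adjoint U3)"
      unfolding 1 Bks by (rule mult_four_block_mat) (use U3 in auto)
    also have "\<dots> = four_block_mat (dmat 1 (\<lambda>_. Re e)) (0\<^sub>m 1 k) (0\<^sub>m k 1) A3"
      using U3 A3eq A3 by (simp add: left_add_zero_mat)
    finally show ?thesis using A'blk by simp
  qed
  define U where "U = W * Bk"
  have U: "U \<in> carrier_mat ?n ?n" unfolding U_def using W Bk by auto
  have Us: "mat_adjoint U = mat_adjoint Bk * mat_adjoint W" unfolding U_def by (rule adj_mult[OF W Bk])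
  have UU: "mat_adjoint U * U = 1\<^sub>m ?n"
  proof -
    have Bs: "mat_adjoint Bk \<in> carrier_mat ?n ?n" using Bk by auto
    have "mat_adjoint U * U = (mat_adjoint Bk * mat_adjoint W) * (W * Bk)"
      unfolding Us by (simp add: U_def)
    also have "\<dots> = mat_adjoint Bk * ((mat_adjoint W * W) * Bk)"
      using carrier_matD[OF W] carrier_matD[OF Bk] by (simp add: massoc)
    also have "\<dots> = 1\<^sub>m ?n" using WW BkBk Bk by simp
    finally show ?thesis .
  qed
  have UU': "U * mat_adjoint U = 1\<^sub>m ?n"
    by (rule mat_mult_left_right_inverse[OF _ U UU]) (use U in auto)
  have "A = W * A' * mat_adjoint W"
  proof -
    have "W * A' * mat_adjoint W = (W * mat_adjoint W) * A * (W * mat_adjoint W)"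
      unfolding A'_def using carrier_matD[OF W] carrier_matD[OF A] by (simp add: massoc)
    thus ?thesis using WW' A by simp
  qed
  also have "\<dots> = W * (Bk * dmat ?n d * mat_adjoint Bk) * mat_adjoint W" using BDB by simp
  also have "\<dots> = U * dmat ?n d * mat_adjoint U"
    unfolding Us unfolding U_def using carrier_matD[OF W] carrier_matD[OF Bk] by (simp add: massoc)
  finally show ?case using U UU UU' by blast
qed



lemma ci_smult_left: "dim_vec v = dim_vec w \<Longrightarrow> (c \<cdot>\<^sub>v v) \<bullet>c w = c * (v \<bullet>c (w :: complex vec))"
  by (simp add: scalar_prod_def sum_distrib_left mult_ac)

lemma ci_smult_right: "dim_vec v = dim_vec w \<Longrightarrow> v \<bullet>c (c \<cdot>\<^sub>v w) = cnj c * (v \<bullet>c (w :: complex vec))"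
  by (simp add: scalar_prod_def sum_distrib_left mult_ac)

lemma ci_add_left: "v \<in> carrier_vec n \<Longrightarrow> w \<in> carrier_vec n \<Longrightarrow> u \<in> carrier_vec n \<Longrightarrow>
  (v + w) \<bullet>c u = v \<bullet>c u + w \<bullet>c (u :: complex vec)"
  by (simp add: scalar_prod_def sum.distrib algebra_simps)

lemma ci_conj: "dim_vec v = dim_vec w \<Longrightarrow> v \<bullet>c w = cnj (w \<bullet>c (v :: complex vec))"
  by (simp add: scalar_prod_def cnj_sum mult.commute)

lemma isometry_norm: assumes U: "U \<in> carrier_mat n k" and UU: "mat_adjoint U * U = 1\<^sub>m k"
  and v: "v \<in> carrier_vec k"
  shows "vec_norm2 (U *\<^sub>v v) = vec_norm2 v"
proof -
  have "(U *\<^sub>v v) \<bullet>c (U *\<^sub>v v) = v \<bullet>c (mat_adjoint U *\<^sub>v (U *\<^sub>v v))"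
    by (rule adj_mult_vec[OF U v]) (use U v in auto)
  also have "mat_adjoint U *\<^sub>v (U *\<^sub>v v) = (mat_adjoint U * U) *\<^sub>v v"
    by (rule assoc_mult_mat_vec[symmetric]) (use U v in auto)
  also have "\<dots> = v" using UU v by simp
  finally have "(vec_norm2 (U *\<^sub>v v))\<^sup>2 = (vec_norm2 v)\<^sup>2" by (simp add: vn_sq)
  thus ?thesis using vn_nonneg by (simp add: power2_eq_iff_nonneg)
qed

lemma dmat_bound: assumes d: "\<And>i. i < n \<Longrightarrow> \<bar>d i\<bar> \<le> c" and c: "c \<ge> 0"
  and v: "v \<in> carrier_vec n"
  shows "vec_norm2 (dmat n d *\<^sub>v v) \<le> c * vec_norm2 v"
proof -
  have e: "(dmat n d *\<^sub>v v) $ i = complex_of_real (d i) * v $ i" if "i < n" for i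
  proof -
    have "(dmat n d *\<^sub>v v) $ i = (\<Sum>j<n. dmat n d $$ (i,j) * v $ j)"
      using that v by (simp add: scalar_prod_def atLeast0LessThan)
    also have "\<dots> = (\<Sum>j<n. (if j = i then complex_of_real (d i) * v $ j else 0))"
      using that by (intro sum.cong) auto
    also have "\<dots> = complex_of_real (d i) * v $ i" using that by (simp add: sum.delta)
    finally show ?thesis .
  qed
  have "vec_norm2 (dmat n d *\<^sub>v v) = L2_set (\<lambda>i. cmod ((dmat n d *\<^sub>v v) $ i)) {..<n}"
    by (simp add: vn_L2)
  also have "\<dots> = L2_set (\<lambda>i. \<bar>d i\<bar> * cmod (v $ i)) {..<n}"
  proof (rule L2_set_cong)
    fix i assume "i \<in> {..<n}"
    hence "cmod ((dmat n d *\<^sub>v v) $ i) = cmod (complex_of_real (d i) * v $ i)" using e by simp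
    thus "cmod ((dmat n d *\<^sub>v v) $ i) = \<bar>d i\<bar> * cmod (v $ i)" by (simp add: norm_mult)
  qed simp
  also have "\<dots> \<le> L2_set (\<lambda>i. c * cmod (v $ i)) {..<n}"
    using d by (intro L2_set_mono mult_right_mono) auto
  also have "\<dots> = c * vec_norm2 v" using v c by (simp add: vn_L2 L2_set_right_distrib)
  finally show ?thesis .
qed

definition unit_sq :: "complex mat \<Rightarrow> nat \<Rightarrow> bool" where
  "unit_sq U n \<longleftrightarrow> U \<in> carrier_mat n n \<and> mat_adjoint U * U = 1\<^sub>m n \<and> U * mat_adjoint U = 1\<^sub>m n"

definition sf :: "complex mat \<Rightarrow> nat \<Rightarrow> (nat \<Rightarrow> real) \<Rightarrow> complex mat" where
  "sf U n d = U * dmat n d * mat_adjoint U"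

lemma spectral_sf: assumes "A \<in> carrier_mat n n" "mat_adjoint A = A"
  shows "\<exists>U d. unit_sq U n \<and> A = sf U n d"
  using spectral[OF assms] unfolding unit_sq_def sf_def by blast

lemma sf_carrier[simp]: "unit_sq U n \<Longrightarrow> sf U n d \<in> carrier_mat n n"
  unfolding unit_sq_def sf_def by auto

lemma dmat_mult: "dmat n a * dmat n b = dmat n (\<lambda>i. a i * b i)"
proof (rule eq_matI)
  fix i j assume "i < dim_row (dmat n (\<lambda>i. a i * b i))" "j < dim_col (dmat n (\<lambda>i. a i * b i))"
  hence i: "i < n" and j: "j < n" by auto
  have "(dmat n a * dmat n b) $$ (i,j) = (\<Sum>l<n. dmat n a $$ (i,l) * dmat n b $$ (l,j))"
    using i j by (simp add: scalar_prod_def atLeast0LessThan)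
  also have "\<dots> = (\<Sum>l<n. if l = i then dmat n a $$ (i,l) * dmat n b $$ (l,j) else 0)"
    using i j by (intro sum.cong) auto
  also have "\<dots> = dmat n (\<lambda>i. a i * b i) $$ (i,j)" using i j by (simp add: sum.delta)
  finally show "(dmat n a * dmat n b) $$ (i,j) = dmat n (\<lambda>i. a i * b i) $$ (i,j)" .
qed auto

lemma dmat_mult2: "dim_row X = n \<Longrightarrow> dmat n a * (dmat n b * X) = dmat n (\<lambda>i. a i * b i) * X"
  by (simp add: massoc[symmetric] dmat_mult)

lemma dmat_adj[simp]: "mat_adjoint (dmat n d) = dmat n d"
  by (rule eq_matI) auto

lemma dmat_one: "dmat n (\<lambda>_. 1) = 1\<^sub>m n"
  by (rule eq_matI) auto

lemma dmat_minus: "dmat n a - dmat n b = dmat n (\<lambda>i. a i - b i)"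
  by (rule eq_matI) auto

lemma dmat_zero: "dmat n (\<lambda>_. 0) = 0\<^sub>m n n"
  by (rule eq_matI) auto

lemma sf_mult: assumes U: "unit_sq U n" shows "sf U n a * sf U n b = sf U n (\<lambda>i. a i * b i)"
proof -
  have c: "U \<in> carrier_mat n n" and UU: "mat_adjoint U * U = 1\<^sub>m n" using U by (auto simp: unit_sq_def)
  have d: "dim_row U = n" "dim_col U = n" using c by auto
  have "sf U n a * sf U n b = U * (dmat n a * ((mat_adjoint U * U) * (dmat n b * mat_adjoint U)))"
    unfolding sf_def using d by (simp add: massoc)
  also have "\<dots> = sf U n (\<lambda>i. a i * b i)" unfolding sf_def UU using d
    by (simp add: massoc dmat_mult2)
  finally show ?thesis .
qed

lemma sf_one: assumes U: "unit_sq U n" shows "sf U n (\<lambda>_. 1) = 1\<^sub>m n"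
  using U unfolding sf_def unit_sq_def dmat_one by auto

lemma sf_minus: assumes U: "unit_sq U n" shows "sf U n a - sf U n b = sf U n (\<lambda>i. a i - b i)"
proof -
  have c: "U \<in> carrier_mat n n" using U by (auto simp: unit_sq_def)
  have d: "dim_row U = n" "dim_col U = n" using c by auto
  show ?thesis unfolding sf_def dmat_minus[symmetric] using d
    by (simp add: mdistl_minus mdistr_minus)
qed

lemma sf_adj: assumes U: "unit_sq U n" shows "mat_adjoint (sf U n a) = sf U n a"
proof -
  have c: "U \<in> carrier_mat n n" using U by (auto simp: unit_sq_def)
  show ?thesis unfolding sf_def
    using carrier_matD[OF c] by (simp add: adj_mult' massoc)
qed

lemma sf_bound: assumes U: "unit_sq U n" and d: "\<And>i. i < n \<Longrightarrow> \<bar>a i\<bar> \<le> c" and c: "c \<ge> 0"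
  and v: "v \<in> carrier_vec n"
  shows "vec_norm2 (sf U n a *\<^sub>v v) \<le> c * vec_norm2 v"
proof -
  have Uc: "U \<in> carrier_mat n n" and UU: "mat_adjoint U * U = 1\<^sub>m n" and UU': "U * mat_adjoint U = 1\<^sub>m n"
    using U by (auto simp: unit_sq_def)
  have Us: "mat_adjoint U \<in> carrier_mat n n" using Uc by auto
  have UsUs: "mat_adjoint (mat_adjoint U) * mat_adjoint U = 1\<^sub>m n" using UU' by simp
  have "sf U n a *\<^sub>v v = U *\<^sub>v (dmat n a *\<^sub>v (mat_adjoint U *\<^sub>v v))"
    unfolding sf_def using carrier_matD[OF Uc] v by (simp add: massocv)
  hence "vec_norm2 (sf U n a *\<^sub>v v) = vec_norm2 (dmat n a *\<^sub>v (mat_adjoint U *\<^sub>v v))"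
    using isometry_norm[OF Uc UU, of "dmat n a *\<^sub>v (mat_adjoint U *\<^sub>v v)"]
      mult_mat_vec_carrier[OF dmat_carrier mult_mat_vec_carrier[OF Us v]] by simp
  also have "\<dots> \<le> c * vec_norm2 (mat_adjoint U *\<^sub>v v)" by (rule dmat_bound[OF d c]) (use Us v in auto)
  also have "vec_norm2 (mat_adjoint U *\<^sub>v v) = vec_norm2 v" by (rule isometry_norm[OF Us UsUs v])
  finally show ?thesis .
qed

lemma sf_norm: assumes U: "unit_sq U n" and d: "\<And>i. i < n \<Longrightarrow> \<bar>a i\<bar> \<le> c" and c: "c \<ge> 0"
  shows "spec_norm (sf U n a) \<le> c"
  by (rule sn_le[OF sf_carrier[OF U] c sf_bound[OF U d c]])

lemma sf_eig: assumes U: "unit_sq U n" and i: "i < n"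
  shows "sf U n a *\<^sub>v col U i = complex_of_real (a i) \<cdot>\<^sub>v col U i"
    "col U i \<bullet>c col U i = 1" "col U i \<in> carrier_vec n"
proof -
  have Uc: "U \<in> carrier_mat n n" and UU: "mat_adjoint U * U = 1\<^sub>m n"
    using U by (auto simp: unit_sq_def)
  have Us: "mat_adjoint U \<in> carrier_mat n n" using Uc by auto
  have 1: "mat_adjoint U *\<^sub>v col U i = unit_vec n i"
    using col_mult2[OF Us Uc i] UU i by simp
  have 2: "dmat n a *\<^sub>v unit_vec n i = complex_of_real (a i) \<cdot>\<^sub>v unit_vec n i"
    by (rule eq_vecI) (auto simp: i)
  have "sf U n a *\<^sub>v col U i = U *\<^sub>v (dmat n a *\<^sub>v (mat_adjoint U *\<^sub>v col U i))"
    unfolding sf_def using carrier_matD[OF Uc] i by (simp add: massocv)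
  also have "\<dots> = complex_of_real (a i) \<cdot>\<^sub>v (U *\<^sub>v unit_vec n i)" unfolding 1 2
    using Uc by (simp add: mult_mat_vec)
  also have "U *\<^sub>v unit_vec n i = col U i" using Uc i by (metis col_mult2 col_one one_carrier_mat right_mult_one_mat)
  finally show "sf U n a *\<^sub>v col U i = complex_of_real (a i) \<cdot>\<^sub>v col U i" .
  have "col U i \<bullet>c col U i = (mat_adjoint U * U) $$ (i,i)"
    using Uc i by (simp add: scalar_prod_def atLeast0LessThan mult.commute)
  thus "col U i \<bullet>c col U i = 1" using UU i by simp
  show "col U i \<in> carrier_vec n" using Uc i by auto
qed



lemma dmat_mult_vec_index: assumes "v \<in> carrier_vec n" "i < n"
  shows "(dmat n d *\<^sub>v v) $ i = complex_of_real (d i) * v $ i"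
proof -
  have "(dmat n d *\<^sub>v v) $ i = (\<Sum>j<n. dmat n d $$ (i,j) * v $ j)"
    using assms by (simp add: scalar_prod_def atLeast0LessThan)
  also have "\<dots> = (\<Sum>j<n. (if j = i then complex_of_real (d i) * v $ j else 0))"
    using assms by (intro sum.cong) auto
  also have "\<dots> = complex_of_real (d i) * v $ i" using assms by (simp add: sum.delta)
  finally show ?thesis .
qed

lemma sf_cong: assumes "\<And>i. i < n \<Longrightarrow> a i = b i" shows "sf U n a = sf U n b"
proof -
  have "dmat n a = dmat n b" by (rule eq_matI) (auto simp: assms)
  thus ?thesis by (simp add: sf_def)
qed

lemma sf_posdef: assumes U: "unit_sq U n" and pos: "\<And>i. i < n \<Longrightarrow> a i > 0"
  shows "pos_def_mat (sf U n a)"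
proof -
  have Uc: "U \<in> carrier_mat n n" and UU': "U * mat_adjoint U = 1\<^sub>m n" using U by (auto simp: unit_sq_def)
  have Us: "mat_adjoint U \<in> carrier_mat n n" using Uc by auto
  have herm: "hermitian_mat (sf U n a)" unfolding hermitian_mat_def using sf_adj[OF U] carrier_matD[OF sf_carrier[OF U]]
    by (simp add: square_mat.simps)
  { fix x :: "complex vec" assume x: "x \<in> carrier_vec n" "x \<noteq> 0\<^sub>v n"
    define y where "y = mat_adjoint U *\<^sub>v x"
    have y: "y \<in> carrier_vec n" unfolding y_def using Us x by auto
    have "U *\<^sub>v y = x" unfolding y_def using UU' x carrier_matD[OF Uc] by (simp add: massocv[symmetric])
    hence yn: "y \<noteq> 0\<^sub>v n" using x Uc by auto
    then obtain j where j: "j < n" "y $ j \<noteq> 0" using y by (metis eq_vecI carrier_vecD index_zero_vec)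
    have "(sf U n a *\<^sub>v x) \<bullet>c x = (U *\<^sub>v (dmat n a *\<^sub>v y)) \<bullet>c x"
      unfolding sf_def y_def using carrier_matD[OF Uc] x by (simp add: massocv)
    also have "\<dots> = (dmat n a *\<^sub>v y) \<bullet>c y"
      unfolding y_def by (rule adj_mult_vec[OF Uc]) (use Us x in auto)
    also have "\<dots> = (\<Sum>i<n. complex_of_real (a i * (cmod (y $ i))\<^sup>2))"
    proof -
      have "(dmat n a *\<^sub>v y) \<bullet>c y = (\<Sum>i<n. (dmat n a *\<^sub>v y) $ i * cnj (y $ i))"
        using y by (simp add: scalar_prod_def atLeast0LessThan)
      also have "\<dots> = (\<Sum>i<n. complex_of_real (a i) * (y $ i * cnj (y $ i)))"
      proof (rule sum.cong[OF refl])
        fix i assume "i \<in> {..<n}"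
        hence "(dmat n a *\<^sub>v y) $ i = complex_of_real (a i) * y $ i" using dmat_mult_vec_index[OF y] by simp
        thus "(dmat n a *\<^sub>v y) $ i * cnj (y $ i) = complex_of_real (a i) * (y $ i * cnj (y $ i))"
          by (simp only: mult.assoc)
      qed
      also have "\<dots> = (\<Sum>i<n. complex_of_real (a i * (cmod (y $ i))\<^sup>2))"
        by (intro sum.cong refl) (simp add: complex_norm_square[symmetric])
      finally show ?thesis .
    qed
    also have "\<dots> = complex_of_real (\<Sum>i<n. a i * (cmod (y $ i))\<^sup>2)" by simp
    finally have q: "(sf U n a *\<^sub>v x) \<bullet>c x = complex_of_real (\<Sum>i<n. a i * (cmod (y $ i))\<^sup>2)" .
    have "0 < a j * (cmod (y $ j))\<^sup>2" using pos[OF j(1)] j by simp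
    also have "\<dots> \<le> (\<Sum>i<n. a i * (cmod (y $ i))\<^sup>2)"
    proof (rule member_le_sum)
      fix i assume "i \<in> {..<n} - {j}"
      hence "0 \<le> a i" using pos[of i] by auto
      thus "0 \<le> a i * (cmod (y $ i))\<^sup>2" by simp
    qed (use j in auto)
    finally have "Im ((sf U n a *\<^sub>v x) \<bullet>c x) = 0 \<and> Re ((sf U n a *\<^sub>v x) \<bullet>c x) > 0" using q by simp
  }
  moreover have "dim_row (sf U n a) = n" using sf_carrier[OF U] by auto
  ultimately show ?thesis unfolding pos_def_mat_def using herm by auto
qed

lemma posdef_qf: assumes "pos_def_mat M" "M \<in> carrier_mat n n" "x \<in> carrier_vec n" "x \<noteq> 0\<^sub>v n"
  shows "Re ((M *\<^sub>v x) \<bullet>c x) > 0"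
  using assms unfolding pos_def_mat_def by auto

lemma posdef_herm: "pos_def_mat M \<Longrightarrow> mat_adjoint M = M"
  unfolding pos_def_mat_def hermitian_mat_def by auto

lemma sqrt_unique: assumes M: "M \<in> carrier_mat n n" "pos_def_mat M" and N: "N \<in> carrier_mat n n" "pos_def_mat N"
  and MN: "M * M = N * N"
  shows "M = N"
proof -
  define K where "K = M - N"
  have K: "K \<in> carrier_mat n n" unfolding K_def using M N by auto
  have hK: "mat_adjoint K = K" unfolding K_def using adj_minus[OF M(1) N(1)] posdef_herm[OF M(2)] posdef_herm[OF N(2)] by simp
  obtain U k where U: "unit_sq U n" and Keq: "K = sf U n k" using spectral_sf[OF K hK] by blast
  have dM: "dim_row M = n" "dim_col M = n" and dN: "dim_row N = n" "dim_col N = n" using M N by auto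
  have Z: "M * K + K * N = 0\<^sub>m n n"
  proof -
    have "M * K + K * N = (M * M - M * N) + (M * N - N * N)"
      unfolding K_def using dM dN by (simp add: mdistl_minus mdistr_minus)
    also have "\<dots> = 0\<^sub>m n n" using MN dM dN by (intro eq_matI) auto
    finally show ?thesis .
  qed
  have k0: "k i = 0" if i: "i < n" for i
  proof -
    define u where "u = col U i"
    have u: "u \<in> carrier_vec n" and uu: "u \<bullet>c u = 1" and Ku: "K *\<^sub>v u = complex_of_real (k i) \<cdot>\<^sub>v u"
      using sf_eig[OF U i] Keq unfolding u_def by auto
    have u0: "u \<noteq> 0\<^sub>v n" using uu u by auto
    have "0 = ((M * K + K * N) *\<^sub>v u) \<bullet>c u" unfolding Z using u by (simp add: scalar_prod_def)
    also have "(M * K + K * N) *\<^sub>v u = M *\<^sub>v (K *\<^sub>v u) + K *\<^sub>v (N *\<^sub>v u)"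
      using M N K u by (simp add: add_mult_distrib_mat_vec[of _ n n])
    also have "(M *\<^sub>v (K *\<^sub>v u) + K *\<^sub>v (N *\<^sub>v u)) \<bullet>c u = (M *\<^sub>v (K *\<^sub>v u)) \<bullet>c u + (K *\<^sub>v (N *\<^sub>v u)) \<bullet>c u"
      by (rule ci_add_left) (use M N K u in auto)
    also have "(M *\<^sub>v (K *\<^sub>v u)) \<bullet>c u = complex_of_real (k i) * ((M *\<^sub>v u) \<bullet>c u)"
      unfolding Ku using M u by (simp add: mult_mat_vec ci_smult_left)
    also have "(K *\<^sub>v (N *\<^sub>v u)) \<bullet>c u = (N *\<^sub>v u) \<bullet>c (mat_adjoint K *\<^sub>v u)"
      by (rule adj_mult_vec[OF K]) (use N u in auto)
    also have "\<dots> = complex_of_real (k i) * ((N *\<^sub>v u) \<bullet>c u)"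
      unfolding hK Ku using N u by (simp add: ci_smult_right)
    finally have "complex_of_real (k i) * ((M *\<^sub>v u) \<bullet>c u + (N *\<^sub>v u) \<bullet>c u) = 0"
      by (simp add: algebra_simps)
    moreover have "Re ((M *\<^sub>v u) \<bullet>c u + (N *\<^sub>v u) \<bullet>c u) > 0"
      using posdef_qf[OF M(2) M(1) u u0] posdef_qf[OF N(2) N(1) u u0] by simp
    hence "(M *\<^sub>v u) \<bullet>c u + (N *\<^sub>v u) \<bullet>c u \<noteq> 0" by (metis less_irrefl zero_complex.sel(1))
    ultimately show ?thesis by simp
  qed
  have "K = sf U n (\<lambda>_. 0)" unfolding Keq by (rule sf_cong) (use k0 in auto)
  also have "\<dots> = 0\<^sub>m n n" using U unfolding sf_def unit_sq_def dmat_zero by auto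
  finally have "M - N = 0\<^sub>m n n" unfolding K_def .
  thus ?thesis using M N
    by (intro eq_matI) (auto, metis (no_types, lifting) carrier_matD index_minus_mat(1) index_zero_mat(1) right_minus_eq)
qed

lemma isq: assumes "(x::real) > 0" shows "1 / sqrt x * (1 / sqrt x) * x = 1" "x * (1 / sqrt x * (1 / sqrt x)) = 1"
proof -
  have s: "sqrt x * sqrt x = x" using assms by simp
  have "sqrt x > 0" using assms by simp
  thus "1 / sqrt x * (1 / sqrt x) * x = 1" "x * (1 / sqrt x * (1 / sqrt x)) = 1" using s by (simp_all add: field_simps)
qed

lemma inv_sqrt_sf: assumes U: "unit_sq U n" and pos: "\<And>i. i < n \<Longrightarrow> w i > 0"
  shows "inv_sqrt_mat (sf U n w) = sf U n (\<lambda>i. 1 / sqrt (w i))"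
proof -
  let ?W = "sf U n w" and ?M = "sf U n (\<lambda>i. 1 / sqrt (w i))"
  have dW: "dim_row ?W = n" using sf_carrier[OF U] by auto
  have MMW: "?M * ?M * ?W = 1\<^sub>m n"
  proof -
    have "?M * ?M * ?W = sf U n (\<lambda>i. 1 / sqrt (w i) * (1 / sqrt (w i)) * w i)"
      by (simp add: sf_mult[OF U])
    also have "\<dots> = sf U n (\<lambda>_. 1)" by (rule sf_cong, rule isq(1), rule pos)
    finally show ?thesis using sf_one[OF U] by simp
  qed
  have WMM: "?W * (?M * ?M) = 1\<^sub>m n"
  proof -
    have "?W * (?M * ?M) = sf U n (\<lambda>i. w i * (1 / sqrt (w i) * (1 / sqrt (w i))))"
      by (simp add: sf_mult[OF U])
    also have "\<dots> = sf U n (\<lambda>_. 1)" by (rule sf_cong, rule isq(2), rule pos)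
    finally show ?thesis using sf_one[OF U] by simp
  qed
  have PM: "?M \<in> carrier_mat n n \<and> pos_def_mat ?M \<and> ?M * ?M * ?W = 1\<^sub>m n"
    using sf_carrier[OF U] sf_posdef[OF U] pos MMW by auto
  show ?thesis unfolding inv_sqrt_mat_def dW
  proof (rule the_equality)
    show "?M \<in> carrier_mat n n \<and> pos_def_mat ?M \<and> ?M * ?M * ?W = 1\<^sub>m n" by (rule PM)
  next
    fix X assume X: "X \<in> carrier_mat n n \<and> pos_def_mat X \<and> X * X * ?W = 1\<^sub>m n"
    have Xc: "X \<in> carrier_mat n n" using X by auto
    have dX: "dim_row X = n" "dim_col X = n" using Xc by auto
    have dM: "dim_row ?M = n" "dim_col ?M = n" using sf_carrier[OF U] by auto
    have dW': "dim_col ?W = n" using sf_carrier[OF U] by auto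
    have "X * X = X * X * (?W * (?M * ?M))" using WMM dX by simp
    also have "\<dots> = (X * X * ?W) * (?M * ?M)" using dX dM dW dW' by (simp add: massoc)
    also have "\<dots> = ?M * ?M" using X dM by simp
    finally show "X = ?M" using sqrt_unique[of X n ?M] X PM by auto
  qed
qed



lemma sn_mult: assumes A: "A \<in> carrier_mat r k" and B: "B \<in> carrier_mat k c"
  shows "spec_norm (A * B) \<le> spec_norm A * spec_norm B"
proof (rule sn_le[of _ r c])
  show "A * B \<in> carrier_mat r c" using A B by auto
  show "0 \<le> spec_norm A * spec_norm B" using sn_nonneg[OF A] sn_nonneg[OF B] by simp
  fix v :: "complex vec" assume v: "v \<in> carrier_vec c"
  have "vec_norm2 (A * B *\<^sub>v v) = vec_norm2 (A *\<^sub>v (B *\<^sub>v v))" using A B v by simp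
  also have "\<dots> \<le> spec_norm A * vec_norm2 (B *\<^sub>v v)" by (rule sn_bound[OF A]) (use B v in auto)
  also have "\<dots> \<le> spec_norm A * (spec_norm B * vec_norm2 v)"
    by (rule mult_left_mono[OF sn_bound[OF B v] sn_nonneg[OF A]])
  finally show "vec_norm2 (A * B *\<^sub>v v) \<le> spec_norm A * spec_norm B * vec_norm2 v" by (simp add: mult.assoc)
qed

lemma sn_add: assumes A: "A \<in> carrier_mat r c" and B: "B \<in> carrier_mat r c"
  shows "spec_norm (A + B) \<le> spec_norm A + spec_norm B"
proof (rule sn_le[of _ r c])
  show "A + B \<in> carrier_mat r c" using A B by auto
  show "0 \<le> spec_norm A + spec_norm B" using sn_nonneg[OF A] sn_nonneg[OF B] by simp
  fix v :: "complex vec" assume v: "v \<in> carrier_vec c"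
  have "vec_norm2 ((A + B) *\<^sub>v v) = vec_norm2 (A *\<^sub>v v + B *\<^sub>v v)"
    using A B v by (simp add: add_mult_distrib_mat_vec)
  also have "\<dots> \<le> vec_norm2 (A *\<^sub>v v) + vec_norm2 (B *\<^sub>v v)" by (rule vn_triangle[of _ r]) (use A B v in auto)
  also have "\<dots> \<le> spec_norm A * vec_norm2 v + spec_norm B * vec_norm2 v"
    using sn_bound[OF A v] sn_bound[OF B v] by simp
  finally show "vec_norm2 ((A + B) *\<^sub>v v) \<le> (spec_norm A + spec_norm B) * vec_norm2 v" by (simp add: algebra_simps)
qed

lemma sn_minus: assumes A: "A \<in> carrier_mat r c" and B: "B \<in> carrier_mat r c"
  shows "spec_norm (A - B) \<le> spec_norm A + spec_norm B"
proof (rule sn_le[of _ r c])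
  show "A - B \<in> carrier_mat r c" using A B by auto
  show "0 \<le> spec_norm A + spec_norm B" using sn_nonneg[OF A] sn_nonneg[OF B] by simp
  fix v :: "complex vec" assume v: "v \<in> carrier_vec c"
  have "vec_norm2 ((A - B) *\<^sub>v v) = vec_norm2 (A *\<^sub>v v - B *\<^sub>v v)"
    using A B v by (simp add: minus_mult_distrib_mat_vec)
  also have "\<dots> \<le> vec_norm2 (A *\<^sub>v v) + vec_norm2 (B *\<^sub>v v)" by (rule vn_minus_le[of _ r]) (use A B v in auto)
  also have "\<dots> \<le> spec_norm A * vec_norm2 v + spec_norm B * vec_norm2 v"
    using sn_bound[OF A v] sn_bound[OF B v] by simp
  finally show "vec_norm2 ((A - B) *\<^sub>v v) \<le> (spec_norm A + spec_norm B) * vec_norm2 v" by (simp add: algebra_simps)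
qed

lemma sn_adj: assumes A: "A \<in> carrier_mat r c"
  shows "spec_norm (mat_adjoint A) \<le> spec_norm A"
proof (rule sn_le[of _ c r])
  show "mat_adjoint A \<in> carrier_mat c r" using A by auto
  show "0 \<le> spec_norm A" by (rule sn_nonneg[OF A])
  fix v :: "complex vec" assume v: "v \<in> carrier_vec r"
  define w where "w = mat_adjoint A *\<^sub>v v"
  have w: "w \<in> carrier_vec c" unfolding w_def using A v by auto
  have "(vec_norm2 w)\<^sup>2 = Re (w \<bullet>c w)" by (rule vn_sq)
  also have "w \<bullet>c w = (A *\<^sub>v w) \<bullet>c v" unfolding w_def by (rule adj_mult_vec[symmetric, OF A]) (use A v in auto)
  also have "Re \<dots> \<le> cmod \<dots>" by (rule complex_Re_le_cmod)
  also have "\<dots> \<le> vec_norm2 (A *\<^sub>v w) * vec_norm2 v" by (rule cauchy_schwarz) (use A w v in auto)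
  also have "\<dots> \<le> spec_norm A * vec_norm2 w * vec_norm2 v"
    by (rule mult_right_mono[OF sn_bound[OF A w]]) simp
  finally have *: "(vec_norm2 w)\<^sup>2 \<le> spec_norm A * vec_norm2 w * vec_norm2 v" .
  show "vec_norm2 (mat_adjoint A *\<^sub>v v) \<le> spec_norm A * vec_norm2 v"
  proof (cases "vec_norm2 w = 0")
    case True thus ?thesis using sn_nonneg[OF A] w_def by simp
  next
    case False
    hence "vec_norm2 w > 0" using vn_nonneg[of w] by linarith
    with * have "vec_norm2 w \<le> spec_norm A * vec_norm2 v"
      by (simp add: power2_eq_square mult.commute mult.left_commute)
    thus ?thesis unfolding w_def .
  qed
qed

lemma sn_iso_left: assumes H: "H \<in> carrier_mat n k" and HH: "mat_adjoint H * H = 1\<^sub>m k"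
  and M: "M \<in> carrier_mat k c"
  shows "spec_norm (H * M) \<le> spec_norm M"
proof (rule sn_le[of _ n c])
  show "H * M \<in> carrier_mat n c" using H M by auto
  show "0 \<le> spec_norm M" by (rule sn_nonneg[OF M])
  fix v :: "complex vec" assume v: "v \<in> carrier_vec c"
  have "vec_norm2 (H * M *\<^sub>v v) = vec_norm2 (H *\<^sub>v (M *\<^sub>v v))" using H M v by simp
  also have "\<dots> = vec_norm2 (M *\<^sub>v v)" by (rule isometry_norm[OF H HH]) (use M v in auto)
  finally show "vec_norm2 (H * M *\<^sub>v v) \<le> spec_norm M * vec_norm2 v" using sn_bound[OF M v] by simp
qed

lemma sn_iso: assumes H: "H \<in> carrier_mat n k" and HH: "mat_adjoint H * H = 1\<^sub>m k"
  shows "spec_norm H \<le> 1"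
  by (rule sn_le[OF H]) (use isometry_norm[OF H HH] in auto)

lemma sn_iso_adj: assumes H: "H \<in> carrier_mat n k" and HH: "mat_adjoint H * H = 1\<^sub>m k"
  shows "spec_norm (mat_adjoint H) \<le> 1"
  using sn_adj[OF H] sn_iso[OF H HH] by linarith

lemma sn_mult_le: assumes A: "A \<in> carrier_mat r k" and B: "B \<in> carrier_mat k c"
  and a: "spec_norm A \<le> a" and b: "spec_norm B \<le> b"
  shows "spec_norm (A * B) \<le> a * b"
proof -
  have "spec_norm (A * B) \<le> spec_norm A * spec_norm B" by (rule sn_mult[OF A B])
  also have "\<dots> \<le> a * b" using a b sn_nonneg[OF A] sn_nonneg[OF B] by (intro mult_mono) auto
  finally show ?thesis .
qed



definition sel1 :: "nat \<Rightarrow> nat \<Rightarrow> complex mat" where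
  "sel1 N m = mat N m (\<lambda>(i,j). if i = j then 1 else 0)"
definition sel2 :: "nat \<Rightarrow> nat \<Rightarrow> complex mat" where
  "sel2 N m = mat N (N - m) (\<lambda>(i,j). if i = j + m then 1 else 0)"

lemma sel_carrier[simp]: "sel1 N m \<in> carrier_mat N m" "sel2 N m \<in> carrier_mat N (N - m)"
  by (simp_all add: sel1_def sel2_def)

lemma sel_dim[simp]: "dim_row (sel1 N m) = N" "dim_col (sel1 N m) = m"
  "dim_row (sel2 N m) = N" "dim_col (sel2 N m) = N - m"
  by (simp_all add: sel1_def sel2_def)

lemma sel_index[simp]: "i < N \<Longrightarrow> j < m \<Longrightarrow> sel1 N m $$ (i,j) = (if i = j then 1 else 0)"
  "i < N \<Longrightarrow> j < N - m \<Longrightarrow> sel2 N m $$ (i,j) = (if i = j + m then 1 else 0)"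
  by (simp_all add: sel1_def sel2_def)

lemma E1: assumes "dim_col A = N" "m \<le> N"
  shows "A * sel1 N m = mat (dim_row A) m (\<lambda>(i,j). A $$ (i,j))"
proof (rule eq_matI)
  fix i j assume "i < dim_row (mat (dim_row A) m (\<lambda>(i,j). A $$ (i,j)))" "j < dim_col (mat (dim_row A) m (\<lambda>(i,j). A $$ (i,j)))"
  hence i: "i < dim_row A" and j: "j < m" by auto
  have "(A * sel1 N m) $$ (i,j) = (\<Sum>k<N. A $$ (i,k) * sel1 N m $$ (k,j))"
    using i j assms by (simp add: scalar_prod_def atLeast0LessThan)
  also have "\<dots> = (\<Sum>k<N. if k = j then A $$ (i,k) else 0)"
    using j by (intro sum.cong) auto
  also have "\<dots> = A $$ (i,j)" using j assms by simp
  finally show "(A * sel1 N m) $$ (i,j) = mat (dim_row A) m (\<lambda>(i,j). A $$ (i,j)) $$ (i,j)" using i j by simp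
qed auto

lemma E2: assumes "dim_col A = N" "m \<le> N"
  shows "A * sel2 N m = mat (dim_row A) (N - m) (\<lambda>(i,j). A $$ (i,j + m))"
proof (rule eq_matI)
  fix i j assume "i < dim_row (mat (dim_row A) (N - m) (\<lambda>(i,j). A $$ (i,j + m)))" "j < dim_col (mat (dim_row A) (N - m) (\<lambda>(i,j). A $$ (i,j + m)))"
  hence i: "i < dim_row A" and j: "j < N - m" by auto
  have "(A * sel2 N m) $$ (i,j) = (\<Sum>k<N. A $$ (i,k) * sel2 N m $$ (k,j))"
    using i j assms by (simp add: scalar_prod_def atLeast0LessThan)
  also have "\<dots> = (\<Sum>k<N. if k = j + m then A $$ (i,k) else 0)"
    using j by (intro sum.cong) auto
  also have "\<dots> = A $$ (i,j + m)" using j assms by simp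
  finally show "(A * sel2 N m) $$ (i,j) = mat (dim_row A) (N - m) (\<lambda>(i,j). A $$ (i,j + m)) $$ (i,j)" using i j by simp
qed auto

lemma E3: assumes "dim_row A = N" "m \<le> N"
  shows "mat_adjoint (sel1 N m) * A = mat m (dim_col A) (\<lambda>(i,j). A $$ (i,j))"
proof (rule eq_matI)
  fix i j assume "i < dim_row (mat m (dim_col A) (\<lambda>(i,j). A $$ (i,j)))" "j < dim_col (mat m (dim_col A) (\<lambda>(i,j). A $$ (i,j)))"
  hence i: "i < m" and j: "j < dim_col A" by auto
  have "(mat_adjoint (sel1 N m) * A) $$ (i,j) = (\<Sum>k<N. mat_adjoint (sel1 N m) $$ (i,k) * A $$ (k,j))"
    using i j assms by (simp add: scalar_prod_def atLeast0LessThan)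
  also have "\<dots> = (\<Sum>k<N. if k = i then A $$ (k,j) else 0)"
    using i assms by (intro sum.cong) auto
  also have "\<dots> = A $$ (i,j)" using i assms by simp
  finally show "(mat_adjoint (sel1 N m) * A) $$ (i,j) = mat m (dim_col A) (\<lambda>(i,j). A $$ (i,j)) $$ (i,j)" using i j by simp
qed auto

lemma E4: assumes "dim_row A = N" "m \<le> N"
  shows "mat_adjoint (sel2 N m) * A = mat (N - m) (dim_col A) (\<lambda>(i,j). A $$ (i + m,j))"
proof (rule eq_matI)
  fix i j assume "i < dim_row (mat (N - m) (dim_col A) (\<lambda>(i,j). A $$ (i + m,j)))" "j < dim_col (mat (N - m) (dim_col A) (\<lambda>(i,j). A $$ (i + m,j)))"
  hence i: "i < N - m" and j: "j < dim_col A" by auto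
  have "(mat_adjoint (sel2 N m) * A) $$ (i,j) = (\<Sum>k<N. mat_adjoint (sel2 N m) $$ (i,k) * A $$ (k,j))"
    using i j assms by (simp add: scalar_prod_def atLeast0LessThan)
  also have "\<dots> = (\<Sum>k<N. if k = i + m then A $$ (k,j) else 0)"
    using i assms by (intro sum.cong) auto
  also have "\<dots> = A $$ (i + m,j)" using i assms by simp
  finally show "(mat_adjoint (sel2 N m) * A) $$ (i,j) = mat (N - m) (dim_col A) (\<lambda>(i,j). A $$ (i + m,j)) $$ (i,j)" using i j by simp
qed auto

lemma E5: assumes "dim_row A = m" "m \<le> N"
  shows "sel1 N m * A = mat N (dim_col A) (\<lambda>(i,j). if i < m then A $$ (i,j) else 0)"
proof (rule eq_matI)
  fix i j assume "i < dim_row (mat N (dim_col A) (\<lambda>(i,j). if i < m then A $$ (i,j) else 0))"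
    "j < dim_col (mat N (dim_col A) (\<lambda>(i,j). if i < m then A $$ (i,j) else 0))"
  hence i: "i < N" and j: "j < dim_col A" by auto
  have "(sel1 N m * A) $$ (i,j) = (\<Sum>k<m. sel1 N m $$ (i,k) * A $$ (k,j))"
    using i j assms by (simp add: scalar_prod_def atLeast0LessThan)
  also have "\<dots> = (\<Sum>k<m. if k = i then A $$ (k,j) else 0)"
    using i by (intro sum.cong) auto
  also have "\<dots> = (if i < m then A $$ (i,j) else 0)" by simp
  finally show "(sel1 N m * A) $$ (i,j) = mat N (dim_col A) (\<lambda>(i,j). if i < m then A $$ (i,j) else 0) $$ (i,j)"
    using i j by simp
qed (use assms in auto)

lemma E6: assumes "dim_row A = N - m" "m \<le> N"
  shows "sel2 N m * A = mat N (dim_col A) (\<lambda>(i,j). if m \<le> i then A $$ (i - m,j) else 0)"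
proof (rule eq_matI)
  fix i j assume "i < dim_row (mat N (dim_col A) (\<lambda>(i,j). if m \<le> i then A $$ (i - m,j) else 0))"
    "j < dim_col (mat N (dim_col A) (\<lambda>(i,j). if m \<le> i then A $$ (i - m,j) else 0))"
  hence i: "i < N" and j: "j < dim_col A" by auto
  have "(sel2 N m * A) $$ (i,j) = (\<Sum>k<N - m. sel2 N m $$ (i,k) * A $$ (k,j))"
    using i j assms by (simp add: scalar_prod_def atLeast0LessThan)
  also have "\<dots> = (\<Sum>k<N - m. if m \<le> i \<and> k = i - m then A $$ (k,j) else 0)"
    using i by (intro sum.cong) auto
  also have "\<dots> = (if m \<le> i then A $$ (i - m,j) else 0)"
    using i by (cases "m \<le> i") auto
  finally show "(sel2 N m * A) $$ (i,j) = mat N (dim_col A) (\<lambda>(i,j). if m \<le> i then A $$ (i - m,j) else 0) $$ (i,j)"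
    using i j by simp
qed (use assms in auto)

lemma E7: assumes "dim_col A = m" "m \<le> N"
  shows "A * mat_adjoint (sel1 N m) = mat (dim_row A) N (\<lambda>(i,j). if j < m then A $$ (i,j) else 0)"
proof (rule eq_matI)
  fix i j assume "i < dim_row (mat (dim_row A) N (\<lambda>(i,j). if j < m then A $$ (i,j) else 0))"
    "j < dim_col (mat (dim_row A) N (\<lambda>(i,j). if j < m then A $$ (i,j) else 0))"
  hence i: "i < dim_row A" and j: "j < N" by auto
  have "(A * mat_adjoint (sel1 N m)) $$ (i,j) = (\<Sum>k<m. A $$ (i,k) * mat_adjoint (sel1 N m) $$ (k,j))"
    using i j assms by (simp add: scalar_prod_def atLeast0LessThan)
  also have "\<dots> = (\<Sum>k<m. if k = j then A $$ (i,k) else 0)"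
    using j by (intro sum.cong) auto
  also have "\<dots> = (if j < m then A $$ (i,j) else 0)" by simp
  finally show "(A * mat_adjoint (sel1 N m)) $$ (i,j) = mat (dim_row A) N (\<lambda>(i,j). if j < m then A $$ (i,j) else 0) $$ (i,j)"
    using i j by simp
qed (use assms in auto)

lemma E8: assumes "dim_col A = N - m" "m \<le> N"
  shows "A * mat_adjoint (sel2 N m) = mat (dim_row A) N (\<lambda>(i,j). if m \<le> j then A $$ (i,j - m) else 0)"
proof (rule eq_matI)
  fix i j assume "i < dim_row (mat (dim_row A) N (\<lambda>(i,j). if m \<le> j then A $$ (i,j - m) else 0))"
    "j < dim_col (mat (dim_row A) N (\<lambda>(i,j). if m \<le> j then A $$ (i,j - m) else 0))"
  hence i: "i < dim_row A" and j: "j < N" by auto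
  have "(A * mat_adjoint (sel2 N m)) $$ (i,j) = (\<Sum>k<N - m. A $$ (i,k) * mat_adjoint (sel2 N m) $$ (k,j))"
    using i j assms by (simp add: scalar_prod_def atLeast0LessThan)
  also have "\<dots> = (\<Sum>k<N - m. if m \<le> j \<and> k = j - m then A $$ (i,k) else 0)"
    using j by (intro sum.cong) auto
  also have "\<dots> = (if m \<le> j then A $$ (i,j - m) else 0)"
    using j by (cases "m \<le> j") auto
  finally show "(A * mat_adjoint (sel2 N m)) $$ (i,j) = mat (dim_row A) N (\<lambda>(i,j). if m \<le> j then A $$ (i,j - m) else 0) $$ (i,j)"
    using i j by simp
qed (use assms in auto)

lemma s11: "m \<le> N \<Longrightarrow> mat_adjoint (sel1 N m) * sel1 N m = 1\<^sub>m m"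
  by (subst E3) (auto intro!: eq_matI)
lemma s22: "m \<le> N \<Longrightarrow> mat_adjoint (sel2 N m) * sel2 N m = 1\<^sub>m (N - m)"
  by (subst E4) (auto intro!: eq_matI)
lemma s12: "m \<le> N \<Longrightarrow> mat_adjoint (sel1 N m) * sel2 N m = 0\<^sub>m m (N - m)"
  by (subst E3) (auto intro!: eq_matI)
lemma s21: "m \<le> N \<Longrightarrow> mat_adjoint (sel2 N m) * sel1 N m = 0\<^sub>m (N - m) m"
  by (subst E4) (auto intro!: eq_matI)
lemma ssum: "m \<le> N \<Longrightarrow> sel1 N m * mat_adjoint (sel1 N m) + sel2 N m * mat_adjoint (sel2 N m) = 1\<^sub>m N"
  by (subst E7, simp, simp, subst E8, simp, simp) (auto intro!: eq_matI)

lemma cols_first_sel: "dim_col X = N \<Longrightarrow> m \<le> N \<Longrightarrow> cols_first X m = X * sel1 N m"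
  by (subst E1) (auto simp: cols_first_def)

lemma cols_rest_sel: "dim_col X = N \<Longrightarrow> m \<le> N \<Longrightarrow> cols_rest X m = X * sel2 N m"
  by (subst E2) (auto simp: cols_rest_def)

lemma hcat_sel1: assumes "Y \<in> carrier_mat n m" "V \<in> carrier_mat n (p - m)" "m \<le> p"
  shows "hcat Y V * sel1 p m = Y"
  using assms by (subst E1) (auto simp: hcat_def intro!: eq_matI)

lemma hcat_sel2: assumes "Y \<in> carrier_mat n m" "V \<in> carrier_mat n (p - m)" "m \<le> p"
  shows "hcat Y V * sel2 p m = V"
  using assms by (subst E2) (auto simp: hcat_def intro!: eq_matI)

lemma hcat_carrier: assumes "Y \<in> carrier_mat n m" "V \<in> carrier_mat n (p - m)" "m \<le> p"
  shows "hcat Y V \<in> carrier_mat n p"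
  using assms by (auto simp: hcat_def)



lemma split_four: assumes "A \<in> carrier_mat r1 c1" "B \<in> carrier_mat r1 c2" "C \<in> carrier_mat r2 c1" "D \<in> carrier_mat r2 c2"
  shows "split_block (four_block_mat A B C D) r1 c1 = (A, B, C, D)"
  using assms unfolding split_block_def Let_def by (auto intro!: eq_matI)

lemma split_sel: assumes T: "T \<in> carrier_mat n p" and m: "m \<le> n" "m \<le> p"
  shows "split_block T m m = (mat_adjoint (sel1 n m) * T * sel1 p m, mat_adjoint (sel1 n m) * T * sel2 p m,
     mat_adjoint (sel2 n m) * T * sel1 p m, mat_adjoint (sel2 n m) * T * sel2 p m)"
proof -
  have d: "dim_row T = n" "dim_col T = p" using T by auto
  show ?thesis unfolding split_block_def Let_def using d m
    by (simp add: E3 E4 E1 E2) (auto intro!: eq_matI)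
qed

lemma diag_cross: assumes D: "D \<in> carrier_mat n n" "diagonal_mat D" and m: "m \<le> n"
  shows "mat_adjoint (sel1 n m) * D * sel2 n m = 0\<^sub>m m (n - m)"
    "mat_adjoint (sel2 n m) * D * sel1 n m = 0\<^sub>m (n - m) m"
proof -
  have d: "dim_row D = n" "dim_col D = n" using D by auto
  have z: "D $$ (i,j) = 0" if "i < n" "j < n" "i \<noteq> j" for i j using D(2) that d unfolding diagonal_mat_def by auto
  show "mat_adjoint (sel1 n m) * D * sel2 n m = 0\<^sub>m m (n - m)"
    using d m by (simp add: E3 E2) (auto intro!: eq_matI z)
  show "mat_adjoint (sel2 n m) * D * sel1 n m = 0\<^sub>m (n - m) m"
    using d m by (simp add: E4 E1) (auto intro!: eq_matI z)
qed

lemma diag_real_adj: fixes D :: "complex mat" assumes D: "D \<in> carrier_mat n n" "diagonal_mat D" "\<forall>i<n. D $$ (i,i) \<in> \<real>"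
  shows "mat_adjoint D = D"
proof (rule eq_matI)
  fix i j assume "i < dim_row D" "j < dim_col D"
  hence i: "i < n" and j: "j < n" using D by auto
  have a: "mat_adjoint D $$ (i,j) = cnj (D $$ (j,i))" by (rule adj_index) (use D i j in auto)
  have "cnj (D $$ (j,i)) = D $$ (i,j)"
  proof (cases "i = j")
    case True thus ?thesis using D(3) i j D(1) by (auto simp: Reals_cnj_iff)
  next
    case False thus ?thesis using D(2) i j D(1) unfolding diagonal_mat_def by auto
  qed
  thus "mat_adjoint D $$ (i,j) = D $$ (i,j)" using a by simp
qed (use D in auto)

lemma mat_eq_from_minus: assumes "A \<in> carrier_mat r c" "B \<in> carrier_mat r c" "A - B = 0\<^sub>m r c"
  shows "A = (B :: complex mat)"
proof (rule eq_matI)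
  fix i j assume ij: "i < dim_row B" "j < dim_col B"
  have "A $$ (i,j) - B $$ (i,j) = (A - B) $$ (i,j)" using assms(1,2) ij by simp
  also have "\<dots> = 0" using assms(3) ij assms(2) by simp
  finally show "A $$ (i,j) = B $$ (i,j)" by simp
qed (use assms in auto)

lemma add_minus_cancel_mat: assumes "A \<in> carrier_mat r c" "B \<in> carrier_mat r c"
  shows "B + (A - B) = (A :: complex mat)"
  using assms by (intro eq_matI) auto

lemma sel_norms: assumes "m \<le> N"
  shows "spec_norm (sel1 N m) \<le> 1" "spec_norm (sel2 N m) \<le> 1"
    "spec_norm (mat_adjoint (sel1 N m)) \<le> 1" "spec_norm (mat_adjoint (sel2 N m)) \<le> 1"
  using sn_iso[OF sel_carrier(1) s11[OF assms]] sn_iso[OF sel_carrier(2) s22[OF assms]]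
    sn_iso_adj[OF sel_carrier(1) s11[OF assms]] sn_iso_adj[OF sel_carrier(2) s22[OF assms]] by auto



lemma r1: fixes w x :: real assumes "1 \<le> w" "w \<le> 1 + x" "0 \<le> x" shows "\<bar>1 / sqrt w - 1\<bar> \<le> x"
proof -
  have sw: "sqrt w \<ge> 1" using assms by simp
  have le1: "1 / sqrt w \<le> 1" using sw by simp
  have "1 - x \<le> 1 / sqrt w"
  proof (cases "x \<le> 1")
    case False
    have "0 \<le> 1 / sqrt w" using sw by simp
    thus ?thesis using False by linarith
  next
    case True
    have "(1 - x)^2 * w \<le> (1 - x)^2 * (1 + x)" using assms by (intro mult_left_mono) auto
    also have "(1 - x)^2 * (1 + x) = 1 - x * (1 + x * (1 - x))" by (simp add: power2_eq_square algebra_simps)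
    also have "\<dots> \<le> 1" using True assms by (simp add: mult_nonneg_nonneg)
    finally have "(1 - x)^2 * w \<le> 1" .
    hence "sqrt ((1 - x)^2 * w) \<le> 1" by simp
    hence "(1 - x) * sqrt w \<le> 1" using True by (simp add: real_sqrt_mult)
    thus ?thesis using sw by (simp add: field_simps)
  qed
  thus ?thesis using le1 by linarith
qed
lemma r2: fixes t x :: real assumes "1 - x \<le> t" "t \<le> 1" "0 \<le> x" "x \<le> 1" shows "\<bar>sqrt t - 1\<bar> \<le> x"
proof -
  have t0: "0 \<le> t" using assms by linarith
  have s1: "sqrt t \<le> 1" using assms by simp
  have "t = sqrt t * sqrt t" by (metis t0 abs_of_nonneg real_sqrt_mult_self)
  also have "\<dots> \<le> sqrt t * 1" using s1 t0 by (intro mult_left_mono) auto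
  finally have "t \<le> sqrt t" by simp
  thus ?thesis using assms s1 by linarith
qed

lemma qf_gram: assumes A: "A \<in> carrier_mat r c" and v: "v \<in> carrier_vec c"
  shows "((mat_adjoint A * A) *\<^sub>v v) \<bullet>c v = complex_of_real ((vec_norm2 (A *\<^sub>v v))\<^sup>2)"
proof -
  have "((mat_adjoint A * A) *\<^sub>v v) \<bullet>c v = (mat_adjoint A *\<^sub>v (A *\<^sub>v v)) \<bullet>c v"
    using carrier_matD[OF A] carrier_vecD[OF v] by (simp add: massocv)
  also have "\<dots> = (A *\<^sub>v v) \<bullet>c (mat_adjoint (mat_adjoint A) *\<^sub>v v)"
    by (rule adj_mult_vec) (use A v in auto)
  also have "\<dots> = complex_of_real ((vec_norm2 (A *\<^sub>v v))\<^sup>2)" by (simp add: cinner_self)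
  finally show ?thesis .
qed

lemma eig_qf: assumes U: "unit_sq U n" and i: "i < n"
  shows "(sf U n a *\<^sub>v col U i) \<bullet>c col U i = complex_of_real (a i)"
  using sf_eig[OF U i] by (simp add: ci_smult_left)

lemma linv_facts:
  assumes G: "G \<in> carrier_mat k m" and Gn: "spec_norm G \<le> \<epsilon>"
  shows "inv_sqrt_mat (1\<^sub>m m + mat_adjoint G * G) \<in> carrier_mat m m \<and>
    mat_adjoint (inv_sqrt_mat (1\<^sub>m m + mat_adjoint G * G)) = inv_sqrt_mat (1\<^sub>m m + mat_adjoint G * G) \<and>
    spec_norm (inv_sqrt_mat (1\<^sub>m m + mat_adjoint G * G) - 1\<^sub>m m) \<le> \<epsilon>\<^sup>2 \<and>
    spec_norm (inv_sqrt_mat (1\<^sub>m m + mat_adjoint G * G)) \<le> 1 \<and>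
    (\<exists>Li \<in> carrier_mat m m. Li * inv_sqrt_mat (1\<^sub>m m + mat_adjoint G * G) = 1\<^sub>m m)"
proof -
  define W where "W = 1\<^sub>m m + mat_adjoint G * G"
  have eps: "\<epsilon> \<ge> 0" using sn_nonneg[OF G] Gn by linarith
  have Wc: "W \<in> carrier_mat m m" unfolding W_def using G by auto
  have Gs: "mat_adjoint G \<in> carrier_mat m k" using G by auto
  have GG: "mat_adjoint G * G \<in> carrier_mat m m" using Gs G by auto
  have hW: "mat_adjoint W = W"
  proof -
    have "mat_adjoint W = mat_adjoint (1\<^sub>m m) + mat_adjoint (mat_adjoint G * G)"
      unfolding W_def by (rule adj_add[OF one_carrier_mat GG])
    also have "mat_adjoint (mat_adjoint G * G) = mat_adjoint G * mat_adjoint (mat_adjoint G)"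
      by (rule adj_mult[OF Gs G])
    finally show ?thesis by (simp add: W_def)
  qed
  obtain U w where U: "unit_sq U m" and Weq: "W = sf U m w" using spectral_sf[OF Wc hW] by blast
  have wb: "1 \<le> w i \<and> w i \<le> 1 + \<epsilon>\<^sup>2" if i: "i < m" for i
  proof -
    define u where "u = col U i"
    have u: "u \<in> carrier_vec m" and uu: "u \<bullet>c u = 1" using sf_eig[OF U i] unfolding u_def by auto
    have un: "vec_norm2 u = 1"
    proof -
      have "(vec_norm2 u)\<^sup>2 = 1" using uu by (simp add: vn_sq)
      thus ?thesis using vn_nonneg[of u] by (simp add: power2_eq_1_iff)
    qed
    have "complex_of_real (w i) = (W *\<^sub>v u) \<bullet>c u" unfolding Weq u_def using eig_qf[OF U i] by simp
    also have "W *\<^sub>v u = u + (mat_adjoint G * G) *\<^sub>v u"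
      unfolding W_def using add_mult_distrib_mat_vec[OF one_carrier_mat GG u] u by simp
    also have "(u + (mat_adjoint G * G) *\<^sub>v u) \<bullet>c u = u \<bullet>c u + ((mat_adjoint G * G) *\<^sub>v u) \<bullet>c u"
      by (rule ci_add_left[of _ m]) (use G u in auto)
    also have "\<dots> = complex_of_real (1 + (vec_norm2 (G *\<^sub>v u))\<^sup>2)"
      using uu qf_gram[OF G u] by simp
    finally have wi: "w i = 1 + (vec_norm2 (G *\<^sub>v u))\<^sup>2" by (simp only: of_real_eq_iff)
    have "vec_norm2 (G *\<^sub>v u) \<le> \<epsilon>"
      using sn_bound[OF G u] Gn un sn_nonneg[OF G] by simp
    hence "(vec_norm2 (G *\<^sub>v u))\<^sup>2 \<le> \<epsilon>\<^sup>2" using vn_nonneg by (intro power_mono) auto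
    thus ?thesis using wi by simp
  qed
  have wpos: "w i > 0" if "i < m" for i using wb[OF that] by linarith
  have L: "inv_sqrt_mat W = sf U m (\<lambda>i. 1 / sqrt (w i))" unfolding Weq by (rule inv_sqrt_sf[OF U wpos])
  have c1: "inv_sqrt_mat W \<in> carrier_mat m m" unfolding L by (rule sf_carrier[OF U])
  have c2: "mat_adjoint (inv_sqrt_mat W) = inv_sqrt_mat W" unfolding L by (rule sf_adj[OF U])
  have c3: "spec_norm (inv_sqrt_mat W - 1\<^sub>m m) \<le> \<epsilon>\<^sup>2"
  proof -
    have "inv_sqrt_mat W - 1\<^sub>m m = sf U m (\<lambda>i. 1 / sqrt (w i) - 1)"
      unfolding L sf_one[OF U, symmetric] by (rule sf_minus[OF U])
    also have "spec_norm \<dots> \<le> \<epsilon>\<^sup>2"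
    proof (rule sf_norm[OF U])
      fix i assume "i < m"
      thus "\<bar>1 / sqrt (w i) - 1\<bar> \<le> \<epsilon>\<^sup>2" using r1[of "w i" "\<epsilon>\<^sup>2"] wb by auto
    qed simp
    finally show ?thesis .
  qed
  have c4: "spec_norm (inv_sqrt_mat W) \<le> 1"
    unfolding L
  proof (rule sf_norm[OF U])
    fix i assume "i < m"
    hence "1 \<le> sqrt (w i)" using wb by simp
    thus "\<bar>1 / sqrt (w i)\<bar> \<le> 1" by simp
  qed simp
  have c5: "sf U m (\<lambda>i. sqrt (w i)) * inv_sqrt_mat W = 1\<^sub>m m"
  proof -
    have "sf U m (\<lambda>i. sqrt (w i)) * inv_sqrt_mat W = sf U m (\<lambda>i. sqrt (w i) * (1 / sqrt (w i)))"
      unfolding L by (rule sf_mult[OF U])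
    also have "\<dots> = sf U m (\<lambda>_. 1)" by (rule sf_cong) (use wpos in force)
    finally show ?thesis using sf_one[OF U] by simp
  qed
  show ?thesis unfolding W_def[symmetric] using c1 c2 c3 c4 c5 sf_carrier[OF U] by blast
qed

lemma T_bound: assumes S: "S \<in> carrier_mat m q" and T: "T \<in> carrier_mat k q"
  and ST: "mat_adjoint S * S + mat_adjoint T * T = 1\<^sub>m q"
  shows "spec_norm T \<le> 1"
proof (rule sn_le[OF T])
  fix v :: "complex vec" assume v: "v \<in> carrier_vec q"
  have SS: "mat_adjoint S * S \<in> carrier_mat q q" using S by (intro mult_carrier_mat[of _ q m]) auto
  have TT: "mat_adjoint T * T \<in> carrier_mat q q" using T by (intro mult_carrier_mat[of _ q k]) auto
  have "complex_of_real ((vec_norm2 v)\<^sup>2) = ((mat_adjoint S * S + mat_adjoint T * T) *\<^sub>v v) \<bullet>c v"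
    using ST v by (simp add: cinner_self)
  also have "(mat_adjoint S * S + mat_adjoint T * T) *\<^sub>v v = (mat_adjoint S * S) *\<^sub>v v + (mat_adjoint T * T) *\<^sub>v v"
    by (rule add_mult_distrib_mat_vec[OF SS TT v])
  also have "(\<dots>) \<bullet>c v = ((mat_adjoint S * S) *\<^sub>v v) \<bullet>c v + ((mat_adjoint T * T) *\<^sub>v v) \<bullet>c v"
    by (rule ci_add_left[of _ q]) (use SS TT v in auto)
  also have "\<dots> = complex_of_real ((vec_norm2 (S *\<^sub>v v))\<^sup>2 + (vec_norm2 (T *\<^sub>v v))\<^sup>2)"
    using qf_gram[OF S v] qf_gram[OF T v] by simp
  finally have "(vec_norm2 v)\<^sup>2 = (vec_norm2 (S *\<^sub>v v))\<^sup>2 + (vec_norm2 (T *\<^sub>v v))\<^sup>2"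
    by (simp only: of_real_eq_iff)
  hence "(vec_norm2 (T *\<^sub>v v))\<^sup>2 \<le> (vec_norm2 v)\<^sup>2" by simp
  hence "vec_norm2 (T *\<^sub>v v) \<le> vec_norm2 v" using vn_nonneg by (simp add: power2_le_iff_abs_le)
  thus "vec_norm2 (T *\<^sub>v v) \<le> 1 * vec_norm2 v" by simp
qed simp



lemma norm_split: assumes S: "S \<in> carrier_mat m q" and T: "T \<in> carrier_mat k q"
  and ST: "mat_adjoint S * S + mat_adjoint T * T = 1\<^sub>m q" and v: "v \<in> carrier_vec q"
  shows "(vec_norm2 v)\<^sup>2 = (vec_norm2 (S *\<^sub>v v))\<^sup>2 + (vec_norm2 (T *\<^sub>v v))\<^sup>2"
proof -
  have SS: "mat_adjoint S * S \<in> carrier_mat q q" using S by (intro mult_carrier_mat[of _ q m]) auto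
  have TT: "mat_adjoint T * T \<in> carrier_mat q q" using T by (intro mult_carrier_mat[of _ q k]) auto
  have "complex_of_real ((vec_norm2 v)\<^sup>2) = ((mat_adjoint S * S + mat_adjoint T * T) *\<^sub>v v) \<bullet>c v"
    using ST v by (simp add: cinner_self)
  also have "(mat_adjoint S * S + mat_adjoint T * T) *\<^sub>v v = (mat_adjoint S * S) *\<^sub>v v + (mat_adjoint T * T) *\<^sub>v v"
    by (rule add_mult_distrib_mat_vec[OF SS TT v])
  also have "(\<dots>) \<bullet>c v = ((mat_adjoint S * S) *\<^sub>v v) \<bullet>c v + ((mat_adjoint T * T) *\<^sub>v v) \<bullet>c v"
    by (rule ci_add_left[of _ q]) (use SS TT v in auto)
  also have "\<dots> = complex_of_real ((vec_norm2 (S *\<^sub>v v))\<^sup>2 + (vec_norm2 (T *\<^sub>v v))\<^sup>2)"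
    using qf_gram[OF S v] qf_gram[OF T v] by simp
  finally show ?thesis by (simp only: of_real_eq_iff)
qed

lemma polar:
  assumes S: "S \<in> carrier_mat m q" and T: "T \<in> carrier_mat k q"
    and ST: "mat_adjoint S * S + mat_adjoint T * T = 1\<^sub>m q"
    and Sn: "spec_norm S \<le> \<epsilon>" and e: "\<epsilon> \<le> 1/2"
  shows "\<exists>H R. H \<in> carrier_mat k q \<and> mat_adjoint H * H = 1\<^sub>m q \<and> R \<in> carrier_mat q q \<and>
    mat_adjoint R = R \<and> spec_norm (R - 1\<^sub>m q) \<le> \<epsilon>\<^sup>2 \<and> spec_norm R \<le> 1 \<and> T = H * R"
proof -
  have eps: "\<epsilon> \<ge> 0" using sn_nonneg[OF S] Sn by linarith
  have e2: "\<epsilon>\<^sup>2 \<le> 1" using eps e by (simp add: power_le_one)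
  have Ts: "mat_adjoint T \<in> carrier_mat q k" using T by auto
  define N where "N = mat_adjoint T * T"
  have Nc: "N \<in> carrier_mat q q" unfolding N_def using Ts T by auto
  have hN: "mat_adjoint N = N" unfolding N_def by (simp add: adj_mult[OF Ts T])
  obtain U t where U: "unit_sq U q" and Neq: "N = sf U q t" using spectral_sf[OF Nc hN] by blast
  have tb: "1 - \<epsilon>\<^sup>2 \<le> t i \<and> t i \<le> 1" if i: "i < q" for i
  proof -
    define u where "u = col U i"
    have u: "u \<in> carrier_vec q" and uu: "u \<bullet>c u = 1" using sf_eig[OF U i] unfolding u_def by auto
    have un: "vec_norm2 u = 1"
    proof -
      have "(vec_norm2 u)\<^sup>2 = 1" using uu by (simp add: vn_sq)
      thus ?thesis using vn_nonneg[of u] by (simp add: power2_eq_1_iff)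
    qed
    have "complex_of_real (t i) = (N *\<^sub>v u) \<bullet>c u" unfolding Neq u_def using eig_qf[OF U i] by simp
    also have "\<dots> = complex_of_real ((vec_norm2 (T *\<^sub>v u))\<^sup>2)" unfolding N_def by (rule qf_gram[OF T u])
    finally have ti: "t i = (vec_norm2 (T *\<^sub>v u))\<^sup>2" by (simp only: of_real_eq_iff)
    have sp: "1 = (vec_norm2 (S *\<^sub>v u))\<^sup>2 + (vec_norm2 (T *\<^sub>v u))\<^sup>2"
      using norm_split[OF S T ST u] un by simp
    have "vec_norm2 (S *\<^sub>v u) \<le> \<epsilon>" using sn_bound[OF S u] Sn un sn_nonneg[OF S] by simp
    hence "(vec_norm2 (S *\<^sub>v u))\<^sup>2 \<le> \<epsilon>\<^sup>2" using vn_nonneg by (intro power_mono) auto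
    thus ?thesis using ti sp zero_le_power2[of "vec_norm2 (S *\<^sub>v u)"] by linarith
  qed
  have tpos: "t i > 0" if "i < q" for i
  proof -
    have "\<epsilon>\<^sup>2 \<le> (1/2)\<^sup>2" by (rule power_mono) (use eps e in auto)
    hence "1 - \<epsilon>\<^sup>2 > 0" by (simp add: power2_eq_square)
    thus ?thesis using tb[OF that] by linarith
  qed
  define R where "R = sf U q (\<lambda>i. sqrt (t i))"
  define Ri where "Ri = sf U q (\<lambda>i. 1 / sqrt (t i))"
  define H where "H = T * Ri"
  have Rc: "R \<in> carrier_mat q q" and Ric: "Ri \<in> carrier_mat q q" unfolding R_def Ri_def using sf_carrier[OF U] by auto
  have Hc: "H \<in> carrier_mat k q" unfolding H_def using T Ric by auto
  have dT: "dim_row T = k" "dim_col T = q" using T by auto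
  have dRi: "dim_row Ri = q" "dim_col Ri = q" using Ric by auto
  have HH: "mat_adjoint H * H = 1\<^sub>m q"
  proof -
    have "mat_adjoint H * H = Ri * (N * Ri)"
      unfolding H_def N_def using dT dRi by (simp add: adj_mult' massoc Ri_def sf_adj[OF U])
    also have "\<dots> = sf U q (\<lambda>i. 1 / sqrt (t i) * (t i * (1 / sqrt (t i))))"
      unfolding Ri_def Neq by (simp add: sf_mult[OF U])
    also have "\<dots> = sf U q (\<lambda>_. 1)"
    proof (rule sf_cong)
      fix i assume "i < q"
      hence "t i > 0" by (rule tpos)
      thus "1 / sqrt (t i) * (t i * (1 / sqrt (t i))) = 1" using isq(2)[of "t i"] by (simp add: mult_ac)
    qed
    finally show ?thesis using sf_one[OF U] by simp
  qed
  have HR: "T = H * R"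
  proof -
    have "H * R = T * (Ri * R)" unfolding H_def using dT dRi carrier_matD[OF Rc] by (simp add: massoc)
    also have "Ri * R = sf U q (\<lambda>i. 1 / sqrt (t i) * sqrt (t i))" unfolding Ri_def R_def by (rule sf_mult[OF U])
    also have "\<dots> = sf U q (\<lambda>_. 1)" by (rule sf_cong) (use tpos in force)
    also have "\<dots> = 1\<^sub>m q" by (rule sf_one[OF U])
    finally show ?thesis using T by simp
  qed
  have hR: "mat_adjoint R = R" unfolding R_def by (rule sf_adj[OF U])
  have Rn1: "spec_norm (R - 1\<^sub>m q) \<le> \<epsilon>\<^sup>2"
  proof -
    have "R - 1\<^sub>m q = sf U q (\<lambda>i. sqrt (t i) - 1)"
      unfolding R_def sf_one[OF U, symmetric] by (rule sf_minus[OF U])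
    also have "spec_norm \<dots> \<le> \<epsilon>\<^sup>2"
    proof (rule sf_norm[OF U])
      fix i assume "i < q"
      thus "\<bar>sqrt (t i) - 1\<bar> \<le> \<epsilon>\<^sup>2" using r2[of "\<epsilon>\<^sup>2" "t i"] tb e2 by auto
    qed simp
    finally show ?thesis .
  qed
  have Rn: "spec_norm R \<le> 1" unfolding R_def
  proof (rule sf_norm[OF U])
    fix i assume "i < q"
    hence "0 < t i" "t i \<le> 1" using tpos tb by auto
    thus "\<bar>sqrt (t i)\<bar> \<le> 1" by simp
  qed simp
  show ?thesis using Hc HH Rc hR Rn1 Rn HR by blast
qed



lemma rassoc: "A * B = C \<Longrightarrow> dim_col A = dim_row B \<Longrightarrow> dim_col B = dim_row Z \<Longrightarrow> A * (B * Z) = C * (Z :: 'a :: semiring_0 mat)"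
  by (simp add: massoc[symmetric])

lemma rassoc3: "A * B * C = D \<Longrightarrow> dim_col A = dim_row B \<Longrightarrow> dim_col B = dim_row C \<Longrightarrow> dim_col C = dim_row Z \<Longrightarrow>
  A * (B * (C * Z)) = D * (Z :: 'a :: semiring_0 mat)"
  by (simp add: massoc[symmetric])

lemma adj_add': "dim_row A = dim_row B \<Longrightarrow> dim_col A = dim_col B \<Longrightarrow> mat_adjoint (A + B) = mat_adjoint A + (mat_adjoint B :: complex mat)"
  by (rule adj_add[of A "dim_row A" "dim_col A"]) auto

lemma adj_minus': "dim_row A = dim_row B \<Longrightarrow> dim_col A = dim_col B \<Longrightarrow> mat_adjoint (A - B) = mat_adjoint A - (mat_adjoint B :: complex mat)"
  by (rule adj_minus[of A "dim_row A" "dim_col A"]) auto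

lemma sn_uminus: assumes A: "A \<in> carrier_mat r c" shows "spec_norm (- A) \<le> spec_norm A"
proof (rule sn_le[of _ r c])
  show "- A \<in> carrier_mat r c" using A by auto
  show "0 \<le> spec_norm A" by (rule sn_nonneg[OF A])
  fix v :: "complex vec" assume v: "v \<in> carrier_vec c"
  have "(- A) *\<^sub>v v = - (A *\<^sub>v v)" using A v by (intro eq_vecI) auto
  thus "vec_norm2 (- A *\<^sub>v v) \<le> spec_norm A * vec_norm2 v" using sn_bound[OF A v] by (simp add: vn_uminus)
qed

lemma minus_zero_right: "A \<in> carrier_mat r c \<Longrightarrow> A - 0\<^sub>m r c = (A :: complex mat)"
  by (intro eq_matI) auto

lemma add_zero_right: "A \<in> carrier_mat r c \<Longrightarrow> A + 0\<^sub>m r c = (A :: complex mat)"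
  by (intro eq_matI) auto

lemma add_zero_dims: "dim_row A = r \<Longrightarrow> dim_col A = c \<Longrightarrow> A + 0\<^sub>m r c = (A :: complex mat)"
  by (intro eq_matI) auto

lemma zero_add_dims: "dim_row A = r \<Longrightarrow> dim_col A = c \<Longrightarrow> 0\<^sub>m r c + A = (A :: complex mat)"
  by (intro eq_matI) auto

lemma minus_zero_dims: "dim_row A = r \<Longrightarrow> dim_col A = c \<Longrightarrow> A - 0\<^sub>m r c = (A :: complex mat)"
  by (intro eq_matI) auto

lemma id11: assumes "A \<in> carrier_mat k k" "L \<in> carrier_mat k k" "X \<in> carrier_mat k k"
  shows "L * ((A + X) * L) - A = (L - 1\<^sub>m k) * (A * L) + A * (L - 1\<^sub>m k) + L * (X * (L :: complex mat))"
proof -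
  have d: "dim_row A = k" "dim_col A = k" "dim_row L = k" "dim_col L = k" "dim_row X = k" "dim_col X = k"
    using assms by auto
  have l: "L * ((A + X) * L) - A = L * (A * L) + L * (X * L) - A" using d by (simp add: mdistl mdistr)
  have r: "(L - 1\<^sub>m k) * (A * L) + A * (L - 1\<^sub>m k) + L * (X * L) = (L * (A * L) - A * L) + (A * L - A) + L * (X * L)"
    using d by (simp add: mdistl_minus mdistr_minus)
  show ?thesis unfolding l r using d by (intro eq_matI) auto
qed

lemma id_rr: assumes "R \<in> carrier_mat k k" "A \<in> carrier_mat k k"
  shows "R * (A * R) - A = (R - 1\<^sub>m k) * (A * R) + A * (R - 1\<^sub>m k :: complex mat)"
proof -
  have d: "dim_row A = k" "dim_col A = k" "dim_row R = k" "dim_col R = k" using assms by auto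
  have r: "(R - 1\<^sub>m k) * (A * R) + A * (R - 1\<^sub>m k) = (R * (A * R) - A * R) + (A * R - A)"
    using d by (simp add: mdistl_minus mdistr_minus)
  show ?thesis unfolding r using d by (intro eq_matI) auto
qed

lemma add_minus_assoc: "dim_row A = dim_row B \<Longrightarrow> dim_col A = dim_col B \<Longrightarrow> dim_row B = dim_row C \<Longrightarrow> dim_col B = dim_col C \<Longrightarrow>
  A + B - C = A + (B - (C :: complex mat))"
  by (intro eq_matI) auto



theorem lemma3:
  fixes n m p :: nat and A B C X \<Lambda> G V U :: "complex mat" and \<epsilon> :: real
  assumes A: "A \<in> carrier_mat n n" "hermitian_mat A"
    and B: "B \<in> carrier_mat n n" "hermitian_mat B" "pos_def_mat B"
    and C: "C \<in> carrier_mat n n" "invertible_mat C" "B = mat_adjoint C * C"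
    and X: "X \<in> carrier_mat n n" "mat_adjoint X * B * X = 1\<^sub>m n"
    and Lam: "\<Lambda> \<in> carrier_mat n n" "diagonal_mat \<Lambda>" "\<forall>i<n. \<Lambda> $$ (i,i) \<in> \<real>"
    and eig: "A * X = B * X * \<Lambda>"
    and mp: "m \<le> p" "p < n"
    and G: "G \<in> carrier_mat (n - m) m" "spec_norm G = \<epsilon>" "\<epsilon> \<le> 1/2"
    and V: "V \<in> carrier_mat n (p - m)"
    and U: "U \<in> carrier_mat p p" "unitary_mat U"
    and Q: "Q = hcat ((cols_first X m + cols_rest X m * G) *
                       inv_sqrt_mat (mat_adjoint (cols_first X m + cols_rest X m * G) * B *
                                     (cols_first X m + cols_rest X m * G))) V * U"
    and QBQ: "mat_adjoint Q * B * Q = 1\<^sub>m p"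
  shows
    "let Xm = cols_first X m; Xm' = cols_rest X m;
         Linv = inv_sqrt_mat (mat_adjoint (Xm + Xm' * G) * B * (Xm + Xm' * G))
     in spec_norm (Linv - 1\<^sub>m m) \<le> \<epsilon>\<^sup>2 \<and>
        (\<exists>S H R.
           S \<in> carrier_mat m (p - m) \<and> spec_norm S \<le> \<epsilon> \<and>
           H \<in> carrier_mat (n - m) (p - m) \<and> mat_adjoint H * H = 1\<^sub>m (p - m) \<and>
           R \<in> carrier_mat (p - m) (p - m) \<and> spec_norm (R - 1\<^sub>m (p - m)) \<le> \<epsilon>\<^sup>2 \<and>
           V = Xm * S + Xm' * H * R \<and>
           \<comment> \<open>(2)\<close>
           (\<exists>\<Theta> \<in> carrier_mat n p.
              mat_adjoint X * B * Q =
                (four_block_mat (1\<^sub>m m) (0\<^sub>m m (p - m)) (0\<^sub>m (n - m) m) H + \<Theta>) * U \<and>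
              (case split_block \<Theta> m m of (\<Theta>11, \<Theta>12, \<Theta>21, \<Theta>22) \<Rightarrow>
                 spec_norm \<Theta>11 \<le> \<epsilon>\<^sup>2 \<and> spec_norm \<Theta>22 \<le> \<epsilon>\<^sup>2 \<and>
                 spec_norm \<Theta>12 \<le> (1 + \<epsilon>\<^sup>2) * \<epsilon> \<and> spec_norm \<Theta>21 \<le> (1 + \<epsilon>\<^sup>2) * \<epsilon>)) \<and>
           \<comment> \<open>(3)\<close>
           (\<forall>D Dm Dm'. D \<in> carrier_mat n n \<longrightarrow> diagonal_mat D \<longrightarrow> (\<forall>i<n. D $$ (i,i) \<in> \<real>) \<longrightarrow>
              Dm = fst (split_block D m m) \<longrightarrow> Dm' = snd (snd (snd (split_block D m m))) \<longrightarrow>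
              (\<exists>\<Delta> \<in> carrier_mat p p.
                 mat_adjoint Q * B * X * D * (mat_adjoint X * B * Q) =
                   mat_adjoint U *
                   (four_block_mat Dm (0\<^sub>m m (p - m)) (0\<^sub>m (p - m) m) (mat_adjoint H * Dm' * H) + \<Delta>) * U \<and>
                 (case split_block \<Delta> m m of (\<Delta>11, \<Delta>12, \<Delta>21, \<Delta>22) \<Rightarrow>
                    \<Delta>21 = mat_adjoint \<Delta>12 \<and>
                    spec_norm \<Delta>11 \<le> 4 * spec_norm D * \<epsilon>\<^sup>2 \<and>
                    spec_norm \<Delta>22 \<le> 4 * spec_norm D * \<epsilon>\<^sup>2 \<and>
                    spec_norm \<Delta>12 \<le> 4 * spec_norm D * \<epsilon>))))"
proof -
  have mn: "m \<le> n" and mpl: "m \<le> p" using mp by auto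
  define E1 where "E1 = sel1 n m"
  define E2 where "E2 = sel2 n m"
  define F1 where "F1 = sel1 p m"
  define F2 where "F2 = sel2 p m"
  have dE: "dim_row E1 = n" "dim_col E1 = m" "dim_row E2 = n" "dim_col E2 = n - m"
    unfolding E1_def E2_def by simp_all
  have dF: "dim_row F1 = p" "dim_col F1 = m" "dim_row F2 = p" "dim_col F2 = p - m"
    unfolding F1_def F2_def by simp_all
  have E1c: "E1 \<in> carrier_mat n m" and E2c: "E2 \<in> carrier_mat n (n - m)"
    and F1c: "F1 \<in> carrier_mat p m" and F2c: "F2 \<in> carrier_mat p (p - m)"
    unfolding E1_def E2_def F1_def F2_def by simp_all
  have dX: "dim_row X = n" "dim_col X = n" using X by auto
  have dB: "dim_row B = n" "dim_col B = n" using B by auto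
  have dG: "dim_row G = n - m" "dim_col G = m" using G by auto
  have dV: "dim_row V = n" "dim_col V = p - m" using V by auto
  have dU: "dim_row U = p" "dim_col U = p" using U by auto
  note dims = dE dF dX dB dG dV dU
  have Bh: "mat_adjoint B = B" using B(2) unfolding hermitian_mat_def by auto
  have XBX: "mat_adjoint X * B * X = 1\<^sub>m n" by (rule X(2))
  have e11: "mat_adjoint E1 * E1 = 1\<^sub>m m" unfolding E1_def by (rule s11[OF mn])
  have e22: "mat_adjoint E2 * E2 = 1\<^sub>m (n - m)" unfolding E2_def by (rule s22[OF mn])
  have e12: "mat_adjoint E1 * E2 = 0\<^sub>m m (n - m)" unfolding E1_def E2_def by (rule s12[OF mn])
  have e21: "mat_adjoint E2 * E1 = 0\<^sub>m (n - m) m" unfolding E1_def E2_def by (rule s21[OF mn])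
  have esum: "E1 * mat_adjoint E1 + E2 * mat_adjoint E2 = 1\<^sub>m n" unfolding E1_def E2_def by (rule ssum[OF mn])
  have f11: "mat_adjoint F1 * F1 = 1\<^sub>m m" unfolding F1_def by (rule s11[OF mpl])
  have f22: "mat_adjoint F2 * F2 = 1\<^sub>m (p - m)" unfolding F2_def by (rule s22[OF mpl])
  have f12: "mat_adjoint F1 * F2 = 0\<^sub>m m (p - m)" unfolding F1_def F2_def by (rule s12[OF mpl])
  have f21: "mat_adjoint F2 * F1 = 0\<^sub>m (p - m) m" unfolding F1_def F2_def by (rule s21[OF mpl])
  have UU: "mat_adjoint U * U = 1\<^sub>m p" using U unfolding unitary_mat_def by auto
  have UU': "U * mat_adjoint U = 1\<^sub>m p"
    by (rule mat_mult_left_right_inverse[OF _ U(1) UU]) (use U in auto)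
  have Xm: "cols_first X m = X * E1" unfolding E1_def by (rule cols_first_sel[OF dX(2) mn])
  have Xm': "cols_rest X m = X * E2" unfolding E2_def by (rule cols_rest_sel[OF dX(2) mn])
  define K0 where "K0 = E1 + E2 * G"
  have dK0: "dim_row K0 = n" "dim_col K0 = m" unfolding K0_def using dims by auto
  have K0c: "K0 \<in> carrier_mat n m" using dK0 by auto
  have Y0: "cols_first X m + cols_rest X m * G = X * K0"
    unfolding Xm Xm' K0_def using dims by (simp add: massoc mdistl)
  have K0s: "mat_adjoint K0 = mat_adjoint E1 + mat_adjoint G * mat_adjoint E2"
    unfolding K0_def using dims by (simp add: adj_add' adj_mult')
  have E1K0: "mat_adjoint E1 * K0 = 1\<^sub>m m"
    unfolding K0_def using dims by (simp add: mdistl rassoc[OF e12] e11 add_zero_right[of _ m m])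
  have E2K0: "mat_adjoint E2 * K0 = G"
    unfolding K0_def using dims G by (simp add: mdistl rassoc[OF e22] e21)
  have K0K0: "mat_adjoint K0 * K0 = 1\<^sub>m m + mat_adjoint G * G"
    unfolding K0s using dims dK0 by (simp add: mdistr massoc E1K0 E2K0)
  have W: "mat_adjoint (X * K0) * B * (X * K0) = 1\<^sub>m m + mat_adjoint G * G"
    using dims dK0 by (simp add: adj_mult' massoc rassoc3[OF XBX] K0K0)
  define L where "L = inv_sqrt_mat (mat_adjoint (cols_first X m + cols_rest X m * G) * B * (cols_first X m + cols_rest X m * G))"
  have Leq: "L = inv_sqrt_mat (1\<^sub>m m + mat_adjoint G * G)" unfolding L_def Y0 W ..
  have Gn: "spec_norm G \<le> \<epsilon>" using G by simp
  from linv_facts[OF G(1) Gn, folded Leq]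
  have Lc: "L \<in> carrier_mat m m" and Lh: "mat_adjoint L = L" and Ln1: "spec_norm (L - 1\<^sub>m m) \<le> \<epsilon>\<^sup>2"
    and Ln: "spec_norm L \<le> 1" and Linv: "\<exists>Li\<in>carrier_mat m m. Li * L = 1\<^sub>m m" by auto
  obtain Li where Lic: "Li \<in> carrier_mat m m" and LiL: "Li * L = 1\<^sub>m m" using Linv by auto
  have dL: "dim_row L = m" "dim_col L = m" using Lc by auto
  have eps: "\<epsilon> \<ge> 0" using sn_nonneg[OF G(1)] G by simp
  define Y where "Y = X * K0 * L"
  define P where "P = hcat Y V"
  have Yc: "Y \<in> carrier_mat n m" unfolding Y_def using dims dK0 dL by auto
  have Pc: "P \<in> carrier_mat n p" unfolding P_def by (rule hcat_carrier[OF Yc V mpl])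
  have dP: "dim_row P = n" "dim_col P = p" using Pc by auto
  have dY: "dim_row Y = n" "dim_col Y = m" using Yc by auto
  have L': "L = inv_sqrt_mat (mat_adjoint (X * K0) * B * (X * K0))" unfolding L_def Y0 ..
  have Qe: "Q = P * U" unfolding Q P_def Y_def Y0 L' ..
  have PF1: "P * F1 = Y" unfolding P_def F1_def by (rule hcat_sel1[OF Yc V mpl])
  have PF2: "P * F2 = V" unfolding P_def F2_def by (rule hcat_sel2[OF Yc V mpl])
  have PBP: "mat_adjoint P * B * P = 1\<^sub>m p"
  proof -
    define MP where "MP = mat_adjoint P * B * P"
    have dMP: "dim_row MP = p" "dim_col MP = p" unfolding MP_def using dims dP by auto
    have 1: "mat_adjoint U * (MP * U) = 1\<^sub>m p"
      using QBQ unfolding Qe MP_def using dims dP by (simp add: adj_mult' massoc)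
    have "MP = U * (mat_adjoint U * (MP * U)) * mat_adjoint U"
      using dims dMP by (simp add: massoc rassoc[OF UU'] UU')
    also have "\<dots> = 1\<^sub>m p" unfolding 1 using UU' dims by simp
    finally show ?thesis unfolding MP_def .
  qed
  have YBV: "mat_adjoint Y * B * V = 0\<^sub>m m (p - m)"
  proof -
    have "mat_adjoint Y * B * V = mat_adjoint (P * F1) * B * (P * F2)" by (simp add: PF1 PF2)
    also have "\<dots> = mat_adjoint F1 * (mat_adjoint P * (B * (P * F2)))"
      using dims dP by (simp add: adj_mult' massoc)
    also have "\<dots> = mat_adjoint F1 * F2" using dims dP by (simp add: rassoc3[OF PBP])
    finally show ?thesis using f12 by simp
  qed
  have VBV: "mat_adjoint V * B * V = 1\<^sub>m (p - m)"
  proof -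
    have "mat_adjoint V * B * V = mat_adjoint (P * F2) * B * (P * F2)" by (simp add: PF2)
    also have "\<dots> = mat_adjoint F2 * (mat_adjoint P * (B * (P * F2)))"
      using dims dP by (simp add: adj_mult' massoc)
    also have "\<dots> = mat_adjoint F2 * F2" using dims dP by (simp add: rassoc3[OF PBP])
    finally show ?thesis using f22 by simp
  qed
  define Z where "Z = mat_adjoint X * B * V"
  define S where "S = mat_adjoint E1 * Z"
  define T where "T = mat_adjoint E2 * Z"
  have dZ: "dim_row Z = n" "dim_col Z = p - m" unfolding Z_def using dims by auto
  have Sc: "S \<in> carrier_mat m (p - m)" unfolding S_def using dims dZ by auto
  have Tc: "T \<in> carrier_mat (n - m) (p - m)" unfolding T_def using dims dZ by auto
  have dS: "dim_row S = m" "dim_col S = p - m" using Sc by auto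
  have dT: "dim_row T = n - m" "dim_col T = p - m" using Tc by auto
  have XXB: "X * (mat_adjoint X * B) = 1\<^sub>m n"
  proof (rule mat_mult_left_right_inverse)
    show "mat_adjoint X * B * X = 1\<^sub>m n" by (rule XBX)
  qed (use dims in auto)
  have VXZ: "V = X * Z"
  proof -
    have "X * Z = (X * (mat_adjoint X * B)) * V" unfolding Z_def using dims by (simp add: massoc)
    thus ?thesis using XXB dims by simp
  qed
  have Zs: "Z = E1 * S + E2 * T"
  proof -
    have "E1 * S + E2 * T = (E1 * mat_adjoint E1 + E2 * mat_adjoint E2) * Z"
      unfolding S_def T_def using dims dZ by (simp add: mdistr massoc)
    thus ?thesis using esum dZ by simp
  qed
  have SGT: "S + mat_adjoint G * T = 0\<^sub>m m (p - m)"
  proof -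
    have "mat_adjoint Y * B * V = L * (mat_adjoint K0 * Z)"
      unfolding Y_def Z_def using dims dK0 dL by (simp add: adj_mult' massoc Lh)
    also have "mat_adjoint K0 * Z = S + mat_adjoint G * T"
      unfolding K0s S_def T_def using dims dZ by (simp add: mdistr massoc)
    finally have "L * (S + mat_adjoint G * T) = 0\<^sub>m m (p - m)" using YBV by simp
    hence "Li * (L * (S + mat_adjoint G * T)) = 0\<^sub>m m (p - m)" using Lic by simp
    moreover have "Li * (L * (S + mat_adjoint G * T)) = S + mat_adjoint G * T"
      using Lic dL dS dT dims by (simp add: rassoc[OF LiL])
    ultimately show ?thesis by simp
  qed
  have Seq: "S = - (mat_adjoint G * T)"
  proof (rule eq_matI)
    fix i j assume ij: "i < dim_row (- (mat_adjoint G * T))" "j < dim_col (- (mat_adjoint G * T))"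
    hence "(S + mat_adjoint G * T) $$ (i,j) = 0" using SGT dims dT by simp
    thus "S $$ (i,j) = (- (mat_adjoint G * T)) $$ (i,j)" using ij dS dims dT by (simp add: eq_neg_iff_add_eq_0)
  qed (use dS dims dT in auto)
  have ST: "mat_adjoint S * S + mat_adjoint T * T = 1\<^sub>m (p - m)"
  proof -
    have "1\<^sub>m (p - m) = mat_adjoint Z * Z"
      using VBV unfolding VXZ using dims dZ by (simp add: adj_mult' massoc rassoc3[OF XBX])
    also have "\<dots> = mat_adjoint Z * ((E1 * mat_adjoint E1 + E2 * mat_adjoint E2) * Z)" using esum dZ by simp
    also have "\<dots> = mat_adjoint S * S + mat_adjoint T * T"
      unfolding S_def T_def using dims dZ by (simp add: mdistr mdistl massoc adj_mult')
    finally show ?thesis by simp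
  qed
  have Tn: "spec_norm T \<le> 1" by (rule T_bound[OF Sc Tc ST])
  have Sn: "spec_norm S \<le> \<epsilon>"
  proof -
    have Gs: "mat_adjoint G \<in> carrier_mat m (n - m)" using G by auto
    have "spec_norm S \<le> spec_norm (mat_adjoint G * T)" unfolding Seq
      by (rule sn_uminus) (use Gs Tc in auto)
    also have "\<dots> \<le> \<epsilon> * 1"
      by (rule sn_mult_le[OF Gs Tc _ Tn]) (use sn_adj[OF G(1)] G in auto)
    finally show ?thesis by simp
  qed
  obtain H R where Hc: "H \<in> carrier_mat (n - m) (p - m)" and HH: "mat_adjoint H * H = 1\<^sub>m (p - m)"
    and Rc: "R \<in> carrier_mat (p - m) (p - m)" and Rh: "mat_adjoint R = R"
    and Rn1: "spec_norm (R - 1\<^sub>m (p - m)) \<le> \<epsilon>\<^sup>2" and Rn: "spec_norm R \<le> 1" and THR: "T = H * R"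
    using polar[OF Sc Tc ST Sn G(3)] by blast
  have dH: "dim_row H = n - m" "dim_col H = p - m" using Hc by auto
  have dR: "dim_row R = p - m" "dim_col R = p - m" using Rc by auto
  have Veq: "V = cols_first X m * S + cols_rest X m * H * R"
    unfolding VXZ Xm Xm' using Zs THR dims dS dH dR by (simp add: massoc mdistl)
  define M where "M = mat_adjoint X * B * P"
  have dM: "dim_row M = n" "dim_col M = p" unfolding M_def using dims dP by auto
  have Mc: "M \<in> carrier_mat n p" using dM by auto
  define fb where "fb = four_block_mat (1\<^sub>m m) (0\<^sub>m m (p - m)) (0\<^sub>m (n - m) m) H"
  have fbc: "fb \<in> carrier_mat n p"
    unfolding fb_def using four_block_carrier_mat[of "1\<^sub>m m" m m H "n - m" "p - m"] Hc mn mpl by simp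
  define Th where "Th = M - fb"
  have Thc: "Th \<in> carrier_mat n p" unfolding Th_def using Mc fbc by auto
  have dTh: "dim_row Th = n" "dim_col Th = p" using Thc by auto
  have dfb: "dim_row fb = n" "dim_col fb = p" using fbc by auto
  have XBQ: "mat_adjoint X * B * Q = (fb + Th) * U"
  proof -
    have "fb + Th = M" unfolding Th_def by (rule add_minus_cancel_mat[OF Mc fbc])
    thus ?thesis unfolding Qe M_def using dims dP by (simp add: massoc)
  qed
  have MF1: "M * F1 = K0 * L"
    unfolding M_def using dims dP dK0 dL dY by (simp add: massoc PF1 Y_def rassoc3[OF XBX])
  have MF2: "M * F2 = Z"
    unfolding M_def Z_def using dims dP by (simp add: massoc PF2)
  have fbs: "split_block fb m m = (1\<^sub>m m, 0\<^sub>m m (p - m), 0\<^sub>m (n - m) m, H)"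
    unfolding fb_def by (rule split_four) (use Hc in auto)
  have fbs2: "split_block fb m m = (mat_adjoint E1 * fb * F1, mat_adjoint E1 * fb * F2,
      mat_adjoint E2 * fb * F1, mat_adjoint E2 * fb * F2)"
    unfolding E1_def E2_def F1_def F2_def by (rule split_sel[OF fbc mn mpl])
  have fb11: "mat_adjoint E1 * fb * F1 = 1\<^sub>m m" and fb12: "mat_adjoint E1 * fb * F2 = 0\<^sub>m m (p - m)"
    and fb21: "mat_adjoint E2 * fb * F1 = 0\<^sub>m (n - m) m" and fb22: "mat_adjoint E2 * fb * F2 = H"
    using fbs fbs2 by auto
  have Ths: "split_block Th m m = (mat_adjoint E1 * Th * F1, mat_adjoint E1 * Th * F2,
      mat_adjoint E2 * Th * F1, mat_adjoint E2 * Th * F2)"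
    unfolding E1_def E2_def F1_def F2_def by (rule split_sel[OF Thc mn mpl])
  have blk: "mat_adjoint E1 * Th * FF = mat_adjoint E1 * M * FF - mat_adjoint E1 * fb * FF"
    "mat_adjoint E2 * Th * FF = mat_adjoint E2 * M * FF - mat_adjoint E2 * fb * FF"
    if "dim_row FF = p" for FF
    unfolding Th_def using dims dM dfb that by (simp_all add: mdistl_minus mdistr_minus)
  have T11: "mat_adjoint E1 * Th * F1 = L - 1\<^sub>m m"
  proof -
    have "mat_adjoint E1 * M * F1 = L"
      using dims dM dK0 dL by (simp add: massoc MF1 rassoc[OF E1K0])
    thus ?thesis using blk(1)[OF dF(1)] fb11 by simp
  qed
  have T12: "mat_adjoint E1 * Th * F2 = S"
  proof -
    have "mat_adjoint E1 * M * F2 = S"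
      using dims dM by (simp add: massoc MF2 S_def)
    thus ?thesis using blk(1)[OF dF(3)] fb12 minus_zero_right[OF Sc] by simp
  qed
  have T21: "mat_adjoint E2 * Th * F1 = G * L"
  proof -
    have "mat_adjoint E2 * M * F1 = G * L"
      using dims dM dK0 dL by (simp add: massoc MF1 rassoc[OF E2K0])
    moreover have "G * L \<in> carrier_mat (n - m) m" using G Lc by auto
    ultimately show ?thesis using blk(2)[OF dF(1)] fb21 minus_zero_right by simp
  qed
  have T22: "mat_adjoint E2 * Th * F2 = H * (R - 1\<^sub>m (p - m))"
  proof -
    have "mat_adjoint E2 * M * F2 = T"
      using dims dM by (simp add: massoc MF2 T_def)
    hence "mat_adjoint E2 * Th * F2 = H * R - H" using blk(2)[OF dF(3)] fb22 THR by simp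
    also have "\<dots> = H * (R - 1\<^sub>m (p - m))" using dH dR by (simp add: mdistl_minus)
    finally show ?thesis .
  qed
  have part2: "\<exists>\<Theta> \<in> carrier_mat n p.
              mat_adjoint X * B * Q =
                (four_block_mat (1\<^sub>m m) (0\<^sub>m m (p - m)) (0\<^sub>m (n - m) m) H + \<Theta>) * U \<and>
              (case split_block \<Theta> m m of (\<Theta>11, \<Theta>12, \<Theta>21, \<Theta>22) \<Rightarrow>
                 spec_norm \<Theta>11 \<le> \<epsilon>\<^sup>2 \<and> spec_norm \<Theta>22 \<le> \<epsilon>\<^sup>2 \<and>
                 spec_norm \<Theta>12 \<le> (1 + \<epsilon>\<^sup>2) * \<epsilon> \<and> spec_norm \<Theta>21 \<le> (1 + \<epsilon>\<^sup>2) * \<epsilon>)"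
  proof (rule bexI[OF _ Thc], rule conjI)
    show "mat_adjoint X * B * Q = (four_block_mat (1\<^sub>m m) (0\<^sub>m m (p - m)) (0\<^sub>m (n - m) m) H + Th) * U"
      using XBQ unfolding fb_def .
    have e1: "\<epsilon> \<le> (1 + \<epsilon>\<^sup>2) * \<epsilon>" using eps by (simp add: algebra_simps)
    have n22: "spec_norm (H * (R - 1\<^sub>m (p - m))) \<le> \<epsilon>\<^sup>2"
    proof -
      have "R - 1\<^sub>m (p - m) \<in> carrier_mat (p - m) (p - m)" using Rc by auto
      from sn_iso_left[OF Hc HH this] show ?thesis using Rn1 by linarith
    qed
    have n21: "spec_norm (G * L) \<le> \<epsilon> * 1" by (rule sn_mult_le[OF G(1) Lc _ Ln]) (use G in auto)
    show "case split_block Th m m of (\<Theta>11, \<Theta>12, \<Theta>21, \<Theta>22) \<Rightarrow>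
                 spec_norm \<Theta>11 \<le> \<epsilon>\<^sup>2 \<and> spec_norm \<Theta>22 \<le> \<epsilon>\<^sup>2 \<and>
                 spec_norm \<Theta>12 \<le> (1 + \<epsilon>\<^sup>2) * \<epsilon> \<and> spec_norm \<Theta>21 \<le> (1 + \<epsilon>\<^sup>2) * \<epsilon>"
      unfolding Ths T11 T12 T21 T22 using Ln1 n22 n21 Sn e1 by auto
  qed
  have part3: "\<forall>D Dm Dm'. D \<in> carrier_mat n n \<longrightarrow> diagonal_mat D \<longrightarrow> (\<forall>i<n. D $$ (i,i) \<in> \<real>) \<longrightarrow>
              Dm = fst (split_block D m m) \<longrightarrow> Dm' = snd (snd (snd (split_block D m m))) \<longrightarrow>
              (\<exists>\<Delta> \<in> carrier_mat p p.
                 mat_adjoint Q * B * X * D * (mat_adjoint X * B * Q) =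
                   mat_adjoint U *
                   (four_block_mat Dm (0\<^sub>m m (p - m)) (0\<^sub>m (p - m) m) (mat_adjoint H * Dm' * H) + \<Delta>) * U \<and>
                 (case split_block \<Delta> m m of (\<Delta>11, \<Delta>12, \<Delta>21, \<Delta>22) \<Rightarrow>
                    \<Delta>21 = mat_adjoint \<Delta>12 \<and>
                    spec_norm \<Delta>11 \<le> 4 * spec_norm D * \<epsilon>\<^sup>2 \<and>
                    spec_norm \<Delta>22 \<le> 4 * spec_norm D * \<epsilon>\<^sup>2 \<and>
                    spec_norm \<Delta>12 \<le> 4 * spec_norm D * \<epsilon>))"
  proof (intro allI impI)
    fix D Dm Dm' :: "complex mat" assume Dc: "D \<in> carrier_mat n n" and Dd: "diagonal_mat D" and Dr: "\<forall>i<n. D $$ (i,i) \<in> \<real>"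
      and Dmd: "Dm = fst (split_block D m m)" and Dm'd: "Dm' = snd (snd (snd (split_block D m m)))"
    have Ds: "split_block D m m = (mat_adjoint E1 * D * E1, mat_adjoint E1 * D * E2,
        mat_adjoint E2 * D * E1, mat_adjoint E2 * D * E2)"
      unfolding E1_def E2_def by (rule split_sel[OF Dc mn mn])
    have DmE: "mat_adjoint E1 * D * E1 = Dm" using Dmd Ds by simp
    have Dm'E: "mat_adjoint E2 * D * E2 = Dm'" using Dm'd Ds by simp
    have Dh: "mat_adjoint D = D" by (rule diag_real_adj[OF Dc Dd Dr])
    have c12: "mat_adjoint E1 * D * E2 = 0\<^sub>m m (n - m)" and c21: "mat_adjoint E2 * D * E1 = 0\<^sub>m (n - m) m"
      using diag_cross[OF Dc Dd mn] unfolding E1_def E2_def by auto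
    have dD: "dim_row D = n" "dim_col D = n" using Dc by auto
    have dDm: "dim_row Dm = m" "dim_col Dm = m" "dim_row Dm' = n - m" "dim_col Dm' = n - m"
      using DmE Dm'E dims dD by auto
    have Dmc: "Dm \<in> carrier_mat m m" and Dm'c: "Dm' \<in> carrier_mat (n - m) (n - m)" using dDm by auto
    define d where "d = spec_norm D"
    have d0: "d \<ge> 0" unfolding d_def by (rule sn_nonneg[OF Dc])
    have E1sc: "mat_adjoint E1 \<in> carrier_mat m n" and E2sc: "mat_adjoint E2 \<in> carrier_mat (n - m) n"
      using E1c E2c by auto
    have nE: "spec_norm E1 \<le> 1" "spec_norm E2 \<le> 1" "spec_norm (mat_adjoint E1) \<le> 1" "spec_norm (mat_adjoint E2) \<le> 1"
      using sel_norms[OF mn] unfolding E1_def E2_def by auto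
    have Dmn: "spec_norm Dm \<le> d"
    proof -
      have "spec_norm (mat_adjoint E1 * D) \<le> 1 * d" by (rule sn_mult_le[OF E1sc Dc nE(3)]) (simp add: d_def)
      moreover have ED: "mat_adjoint E1 * D \<in> carrier_mat m n" using E1sc Dc by auto
      ultimately have "spec_norm (mat_adjoint E1 * D * E1) \<le> 1 * d * 1" using sn_mult_le[OF _ E1c _ nE(1)] by blast
      thus ?thesis using DmE by simp
    qed
    have Dm'n: "spec_norm Dm' \<le> d"
    proof -
      have "spec_norm (mat_adjoint E2 * D) \<le> 1 * d" by (rule sn_mult_le[OF E2sc Dc nE(4)]) (simp add: d_def)
      moreover have ED: "mat_adjoint E2 * D \<in> carrier_mat (n - m) n" using E2sc Dc by auto
      ultimately have "spec_norm (mat_adjoint E2 * D * E2) \<le> 1 * d * 1" using sn_mult_le[OF _ E2c _ nE(2)] by blast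
      thus ?thesis using Dm'E by simp
    qed
    have Dmh: "mat_adjoint Dm = Dm" unfolding DmE[symmetric] using dims dD by (simp add: adj_mult' Dh massoc)
    have Dm'h: "mat_adjoint Dm' = Dm'" unfolding Dm'E[symmetric] using dims dD by (simp add: adj_mult' Dh massoc)
    define Hd where "Hd = mat_adjoint H * Dm' * H"
    have dHd: "dim_row Hd = p - m" "dim_col Hd = p - m" unfolding Hd_def using dH dDm by auto
    have Hdc: "Hd \<in> carrier_mat (p - m) (p - m)" using dHd by auto
    have Hdh: "mat_adjoint Hd = Hd" unfolding Hd_def using dH dDm by (simp add: adj_mult' Dm'h massoc)
    have Hsc: "mat_adjoint H \<in> carrier_mat (p - m) (n - m)" using Hc by auto
    have Hdn: "spec_norm Hd \<le> d"
    proof -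
      have "spec_norm (mat_adjoint H * Dm') \<le> 1 * d" by (rule sn_mult_le[OF Hsc Dm'c sn_iso_adj[OF Hc HH] Dm'n])
      moreover have "mat_adjoint H * Dm' \<in> carrier_mat (p - m) (n - m)" using Hsc Dm'c by auto
      ultimately have "spec_norm (mat_adjoint H * Dm' * H) \<le> 1 * d * 1" using sn_mult_le[OF _ Hc _ sn_iso[OF Hc HH]] by blast
      thus ?thesis unfolding Hd_def by simp
    qed
    define fb2 where "fb2 = four_block_mat Dm (0\<^sub>m m (p - m)) (0\<^sub>m (p - m) m) Hd"
    have fb2c: "fb2 \<in> carrier_mat p p"
      unfolding fb2_def using four_block_carrier_mat[OF Dmc Hdc] mpl by simp
    define MDM where "MDM = mat_adjoint M * D * M"
    have MDMc: "MDM \<in> carrier_mat p p" unfolding MDM_def using dM dD by auto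
    define Dl where "Dl = MDM - fb2"
    have Dlc: "Dl \<in> carrier_mat p p" unfolding Dl_def using MDMc fb2c by auto
    have dDl: "dim_row Dl = p" "dim_col Dl = p" using Dlc by auto
    have eqn: "mat_adjoint Q * B * X * D * (mat_adjoint X * B * Q) = mat_adjoint U * (fb2 + Dl) * U"
    proof -
      have "fb2 + Dl = MDM" unfolding Dl_def by (rule add_minus_cancel_mat[OF MDMc fb2c])
      thus ?thesis unfolding Qe MDM_def M_def using dims dD dP by (simp add: adj_mult' massoc Bh)
    qed
    have fb2s: "split_block fb2 m m = (Dm, 0\<^sub>m m (p - m), 0\<^sub>m (p - m) m, Hd)"
      unfolding fb2_def by (rule split_four) (use Dmc Hdc in auto)
    have fb2s2: "split_block fb2 m m = (mat_adjoint F1 * fb2 * F1, mat_adjoint F1 * fb2 * F2,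
        mat_adjoint F2 * fb2 * F1, mat_adjoint F2 * fb2 * F2)"
      unfolding F1_def F2_def using split_sel[OF fb2c mpl mpl] by simp
    have g11: "mat_adjoint F1 * fb2 * F1 = Dm" and g12: "mat_adjoint F1 * fb2 * F2 = 0\<^sub>m m (p - m)"
      and g22: "mat_adjoint F2 * fb2 * F2 = Hd"
      using fb2s fb2s2 by auto
    have Dls: "split_block Dl m m = (mat_adjoint F1 * Dl * F1, mat_adjoint F1 * Dl * F2,
        mat_adjoint F2 * Dl * F1, mat_adjoint F2 * Dl * F2)"
      unfolding F1_def F2_def using split_sel[OF Dlc mpl mpl] by simp
    have blkD: "mat_adjoint FA * Dl * FB = mat_adjoint FA * MDM * FB - mat_adjoint FA * fb2 * FB"
      if "dim_row FA = p" "dim_row FB = p" for FA FB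
      unfolding Dl_def using that MDMc fb2c by (simp add: mdistl_minus mdistr_minus)
    have mblk: "mat_adjoint FA * MDM * FB = mat_adjoint (M * FA) * (D * (M * FB))"
      if "dim_row FA = p" "dim_row FB = p" for FA FB
      unfolding MDM_def using that dM dD by (simp add: adj_mult' massoc)
    have DmR: "mat_adjoint E1 * (D * E1) = Dm" using DmE dims dD by (simp add: massoc)
    have Dm'R: "mat_adjoint E2 * (D * E2) = Dm'" using Dm'E dims dD by (simp add: massoc)
    have c12R: "mat_adjoint E1 * (D * E2) = 0\<^sub>m m (n - m)" using c12 dims dD by (simp add: massoc)
    have c21R: "mat_adjoint E2 * (D * E1) = 0\<^sub>m (n - m) m" using c21 dims dD by (simp add: massoc)
    note R3 = rassoc3[OF DmE] rassoc3[OF Dm'E] rassoc3[OF c12] rassoc3[OF c21]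
    have KDK: "mat_adjoint K0 * D * K0 = Dm + mat_adjoint G * (Dm' * G)"
      unfolding K0s unfolding K0_def using dims dD dDm
      by (simp add: mdistl mdistr massoc DmR Dm'R c12R c21R R3 add_zero_dims zero_add_dims)
    have KDZ: "mat_adjoint K0 * D * Z = Dm * S + mat_adjoint G * (Dm' * T)"
      unfolding K0s unfolding Zs using dims dD dDm dS dT
      by (simp add: mdistl mdistr massoc DmR Dm'R c12R c21R R3 add_zero_dims zero_add_dims)
    have Zsa: "mat_adjoint Z = mat_adjoint S * mat_adjoint E1 + mat_adjoint T * mat_adjoint E2"
      unfolding Zs using dims dS dT by (simp add: adj_add' adj_mult')
    have ZDZ: "mat_adjoint Z * D * Z = mat_adjoint S * (Dm * S) + mat_adjoint T * (Dm' * T)"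
      unfolding Zsa unfolding Zs using dims dD dDm dS dT
      by (simp add: mdistl mdistr massoc DmR Dm'R c12R c21R R3 add_zero_dims zero_add_dims)
    define X1 where "X1 = mat_adjoint G * (Dm' * G)"
    have X1c: "X1 \<in> carrier_mat m m" unfolding X1_def using dims dDm by auto
    have D11: "mat_adjoint F1 * Dl * F1 = L * ((Dm + X1) * L) - Dm"
    proof -
      have "mat_adjoint F1 * MDM * F1 = L * ((Dm + X1) * L)"
        unfolding mblk[OF dF(1) dF(1)] MF1 X1_def KDK[symmetric] using dK0 dL dD Lh by (simp add: adj_mult' massoc)
      thus ?thesis using blkD[OF dF(1) dF(1)] g11 by simp
    qed
    have D12: "mat_adjoint F1 * Dl * F2 = L * (Dm * S + mat_adjoint G * (Dm' * T))"
    proof -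
      have "mat_adjoint F1 * MDM * F2 = L * (Dm * S + mat_adjoint G * (Dm' * T))"
        unfolding mblk[OF dF(1) dF(3)] MF1 MF2 KDZ[symmetric] using dK0 dL dD dZ Lh by (simp add: adj_mult' massoc)
      moreover have "L * (Dm * S + mat_adjoint G * (Dm' * T)) \<in> carrier_mat m (p - m)"
        using dL dDm dS dims dT by auto
      ultimately show ?thesis using blkD[OF dF(1) dF(3)] g12 minus_zero_right by simp
    qed
    have D22: "mat_adjoint F2 * Dl * F2 = mat_adjoint S * (Dm * S) + (R * (Hd * R) - Hd)"
    proof -
      have "mat_adjoint F2 * MDM * F2 = mat_adjoint S * (Dm * S) + mat_adjoint T * (Dm' * T)"
        unfolding mblk[OF dF(3) dF(3)] MF2 ZDZ[symmetric] using dZ dD by (simp add: massoc)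
      also have "mat_adjoint T * (Dm' * T) = R * (Hd * R)"
        unfolding THR Hd_def using dH dR dDm Rh by (simp add: adj_mult' massoc)
      finally have "mat_adjoint F2 * Dl * F2 = mat_adjoint S * (Dm * S) + R * (Hd * R) - Hd"
        using blkD[OF dF(3) dF(3)] g22 by simp
      thus ?thesis using dS dDm dR dHd by (simp add: add_minus_assoc)
    qed
    have Dlh: "mat_adjoint Dl = Dl"
    proof -
      have "mat_adjoint MDM = MDM" unfolding MDM_def using dM dD by (simp add: adj_mult' Dh massoc)
      moreover have "mat_adjoint fb2 = fb2" unfolding fb2_def
        using adj_four_block[OF Dmc _ _ Hdc, of "0\<^sub>m m (p - m)" "0\<^sub>m (p - m) m"] Dmh Hdh by simp
      ultimately show ?thesis unfolding Dl_def using adj_minus[OF MDMc fb2c] by simp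
    qed
    have D21: "mat_adjoint F2 * Dl * F1 = mat_adjoint (mat_adjoint F1 * Dl * F2)"
      using dF dDl by (simp add: adj_mult' Dlh massoc)
    have Sc': "mat_adjoint S \<in> carrier_mat (p - m) m" using Sc by auto
    have Ssn: "spec_norm (mat_adjoint S) \<le> \<epsilon>" using sn_adj[OF Sc] Sn by linarith
    have Gsc: "mat_adjoint G \<in> carrier_mat m (n - m)" using G by auto
    have Gsn: "spec_norm (mat_adjoint G) \<le> \<epsilon>" using sn_adj[OF G(1)] G by linarith
    have L1c: "L - 1\<^sub>m m \<in> carrier_mat m m" using Lc by auto
    have R1c: "R - 1\<^sub>m (p - m) \<in> carrier_mat (p - m) (p - m)" using Rc by auto
    have DmLc: "Dm * L \<in> carrier_mat m m" using Dmc Lc by auto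
    have n11: "spec_norm (mat_adjoint F1 * Dl * F1) \<le> 4 * d * \<epsilon>\<^sup>2"
    proof -
      have a: "spec_norm ((L - 1\<^sub>m m) * (Dm * L)) \<le> \<epsilon>\<^sup>2 * (d * 1)"
        by (rule sn_mult_le[OF L1c DmLc Ln1 sn_mult_le[OF Dmc Lc Dmn Ln]])
      have b: "spec_norm (Dm * (L - 1\<^sub>m m)) \<le> d * \<epsilon>\<^sup>2" by (rule sn_mult_le[OF Dmc L1c Dmn Ln1])
      have x1: "spec_norm X1 \<le> \<epsilon> * (d * \<epsilon>)" unfolding X1_def
        by (rule sn_mult_le[OF Gsc _ Gsn sn_mult_le[OF Dm'c G(1) Dm'n]]) (use G Dm'c in auto)
      have c: "spec_norm (L * (X1 * L)) \<le> 1 * ((\<epsilon> * (d * \<epsilon>)) * 1)"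
        by (rule sn_mult_le[OF Lc _ Ln sn_mult_le[OF X1c Lc x1 Ln]]) (use X1c Lc in auto)
      have "spec_norm (mat_adjoint F1 * Dl * F1) \<le> spec_norm ((L - 1\<^sub>m m) * (Dm * L) + Dm * (L - 1\<^sub>m m)) + spec_norm (L * (X1 * L))"
        unfolding D11 id11[OF Dmc Lc X1c] by (rule sn_add) (use L1c DmLc Dmc Lc X1c in auto)
      also have "\<dots> \<le> (spec_norm ((L - 1\<^sub>m m) * (Dm * L)) + spec_norm (Dm * (L - 1\<^sub>m m))) + spec_norm (L * (X1 * L))"
        using sn_add[of "(L - 1\<^sub>m m) * (Dm * L)" m m "Dm * (L - 1\<^sub>m m)"] L1c DmLc Dmc by auto
      also have "\<dots> \<le> 3 * d * \<epsilon>\<^sup>2" using a b c by (simp add: power2_eq_square algebra_simps)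
      also have "\<dots> \<le> 4 * d * \<epsilon>\<^sup>2" using d0 by (simp add: mult_right_mono)
      finally show ?thesis .
    qed
    have n12: "spec_norm (mat_adjoint F1 * Dl * F2) \<le> 4 * d * \<epsilon>"
    proof -
      have DmSc: "Dm * S \<in> carrier_mat m (p - m)" using Dmc Sc by auto
      have GDTc: "mat_adjoint G * (Dm' * T) \<in> carrier_mat m (p - m)" using Gsc Dm'c Tc by auto
      have a: "spec_norm (Dm * S) \<le> d * \<epsilon>" by (rule sn_mult_le[OF Dmc Sc Dmn Sn])
      have b: "spec_norm (mat_adjoint G * (Dm' * T)) \<le> \<epsilon> * (d * 1)"
        by (rule sn_mult_le[OF Gsc _ Gsn sn_mult_le[OF Dm'c Tc Dm'n Tn]]) (use Dm'c Tc in auto)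
      have "spec_norm (mat_adjoint F1 * Dl * F2) \<le> 1 * (spec_norm (Dm * S) + spec_norm (mat_adjoint G * (Dm' * T)))"
      proof -
        have sumc: "Dm * S + mat_adjoint G * (Dm' * T) \<in> carrier_mat m (p - m)" using DmSc GDTc by auto
        show ?thesis unfolding D12 by (rule sn_mult_le[OF Lc sumc Ln sn_add[OF DmSc GDTc]])
      qed
      also have "\<dots> \<le> 2 * d * \<epsilon>" using a b by (simp add: algebra_simps)
      also have "\<dots> \<le> 4 * d * \<epsilon>" using d0 eps by (simp add: mult_right_mono)
      finally show ?thesis .
    qed
    have n22: "spec_norm (mat_adjoint F2 * Dl * F2) \<le> 4 * d * \<epsilon>\<^sup>2"
    proof -
      have DmSc: "Dm * S \<in> carrier_mat m (p - m)" using Dmc Sc by auto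
      have HdRc: "Hd * R \<in> carrier_mat (p - m) (p - m)" using Hdc Rc by auto
      have a: "spec_norm (mat_adjoint S * (Dm * S)) \<le> \<epsilon> * (d * \<epsilon>)"
        by (rule sn_mult_le[OF Sc' DmSc Ssn sn_mult_le[OF Dmc Sc Dmn Sn]])
      have b: "spec_norm ((R - 1\<^sub>m (p - m)) * (Hd * R)) \<le> \<epsilon>\<^sup>2 * (d * 1)"
        by (rule sn_mult_le[OF R1c HdRc Rn1 sn_mult_le[OF Hdc Rc Hdn Rn]])
      have c: "spec_norm (Hd * (R - 1\<^sub>m (p - m))) \<le> d * \<epsilon>\<^sup>2" by (rule sn_mult_le[OF Hdc R1c Hdn Rn1])
      have "spec_norm (mat_adjoint F2 * Dl * F2) \<le> spec_norm (mat_adjoint S * (Dm * S)) + spec_norm (R * (Hd * R) - Hd)"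
      proof -
        have c1: "mat_adjoint S * (Dm * S) \<in> carrier_mat (p - m) (p - m)" using Sc' DmSc by auto
        have c2: "R * (Hd * R) - Hd \<in> carrier_mat (p - m) (p - m)" using Rc HdRc Hdc by auto
        show ?thesis unfolding D22 by (rule sn_add[OF c1 c2])
      qed
      also have "R * (Hd * R) - Hd = (R - 1\<^sub>m (p - m)) * (Hd * R) + Hd * (R - 1\<^sub>m (p - m))"
        by (rule id_rr[OF Rc Hdc])
      also have "spec_norm \<dots> \<le> spec_norm ((R - 1\<^sub>m (p - m)) * (Hd * R)) + spec_norm (Hd * (R - 1\<^sub>m (p - m)))"
        by (rule sn_add) (use R1c HdRc Hdc in auto)
      finally have "spec_norm (mat_adjoint F2 * Dl * F2) \<le> \<epsilon> * (d * \<epsilon>) + (\<epsilon>\<^sup>2 * (d * 1) + d * \<epsilon>\<^sup>2)"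
        using a b c by linarith
      also have "\<dots> = 3 * d * \<epsilon>\<^sup>2" by (simp add: power2_eq_square algebra_simps)
      also have "\<dots> \<le> 4 * d * \<epsilon>\<^sup>2" using d0 by (simp add: mult_right_mono)
      finally show ?thesis .
    qed
    show "\<exists>\<Delta> \<in> carrier_mat p p.
                 mat_adjoint Q * B * X * D * (mat_adjoint X * B * Q) =
                   mat_adjoint U *
                   (four_block_mat Dm (0\<^sub>m m (p - m)) (0\<^sub>m (p - m) m) (mat_adjoint H * Dm' * H) + \<Delta>) * U \<and>
                 (case split_block \<Delta> m m of (\<Delta>11, \<Delta>12, \<Delta>21, \<Delta>22) \<Rightarrow>
                    \<Delta>21 = mat_adjoint \<Delta>12 \<and>
                    spec_norm \<Delta>11 \<le> 4 * spec_norm D * \<epsilon>\<^sup>2 \<and>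
                    spec_norm \<Delta>22 \<le> 4 * spec_norm D * \<epsilon>\<^sup>2 \<and>
                    spec_norm \<Delta>12 \<le> 4 * spec_norm D * \<epsilon>)"
    proof (rule bexI[OF _ Dlc], rule conjI)
      show "mat_adjoint Q * B * X * D * (mat_adjoint X * B * Q) =
                   mat_adjoint U *
                   (four_block_mat Dm (0\<^sub>m m (p - m)) (0\<^sub>m (p - m) m) (mat_adjoint H * Dm' * H) + Dl) * U"
        using eqn unfolding fb2_def Hd_def .
      show "case split_block Dl m m of (\<Delta>11, \<Delta>12, \<Delta>21, \<Delta>22) \<Rightarrow>
                    \<Delta>21 = mat_adjoint \<Delta>12 \<and>
                    spec_norm \<Delta>11 \<le> 4 * spec_norm D * \<epsilon>\<^sup>2 \<and>
                    spec_norm \<Delta>22 \<le> 4 * spec_norm D * \<epsilon>\<^sup>2 \<and>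
                    spec_norm \<Delta>12 \<le> 4 * spec_norm D * \<epsilon>"
        unfolding Dls using n11 n12 n22 D21 unfolding d_def by simp
    qed
  qed
  show ?thesis unfolding Let_def L_def[symmetric]
    apply (rule conjI[OF Ln1])
    apply (rule exI[of _ S], rule exI[of _ H], rule exI[of _ R])
    apply (intro conjI)
    apply (rule Sc)
    apply (rule Sn)
    apply (rule Hc)
    apply (rule HH)
    apply (rule Rc)
    apply (rule Rn1)
    apply (rule Veq)
    apply (rule part2)
    apply (rule part3)
    done
qed


end
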